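(* A $\mathbf{B}$-constrained stabiliser code family cannot admit a universal set of bounded-spread logical operator implementations.
   Context: A code family is a sequence $(\mathcal{C}_l)_{l\in\mathbb{N}}$ of stabiliser codes, $\mathcal{C}_l$ acting on $n=n(l)$ physical qubits; $\mathbf{P}_n$ is the $n$-qubit Pauli group. Quantum channels are written in the Heisenberg picture, $\mathcal{A}(U)=\sum_iA_iUA_i^\dagger$, $\sum_iA_i^\dagger A_i=I$. A logical operator implementation of a logical operator $\bar{A}$ is a channel $\mathcal{A}$ such that, for every logical operator $\bar{U}$ and every representative $U$ of $\bar{U}$, $\mathcal{A}(U)$ is a representative of $\bar{A}\bar{U}\bar{A}^\dagger$ (need not be unitary). The weight $\mathrm{wt}(O)$ is the number of qubits on which $O$ acts non-trivially. The spread of $E\in\mathbf{P}_n$ under $\mathcal{A}$ is $s_{\mathcal{A}}(E)=\mathrm{wt}(\mathcal{A}(E))/\mathrm{wt}(E)$, $s_{\mathcal{A}}=\max_{E\in\mathbf{P}_n}s_{\mathcal{A}}(E)$; $\mathcal{A}$ has bounded spread if there is a constant $C$ independent of $l$ with $s_{\mathcal{A}}\le C$ for all $l$. For a logical operator $\bar{L}$, $d_{\bar{L}}$ is the minimum weight of a representative; $d$ is the code distance. With $\mathbf{L}$ the set of logical operators, $\mathbf{L}_\downarrow=\{\bar{L}\in\mathbf{L}:\exists C\in\mathbb{R}\text{ with } d_{\bar{L}}/d\le C\ \forall l\in\mathbb{N}\}$, $\mathbf{P}_\downarrow$ is the set of logical Pauli operators in $\mathbf{L}_\downarrow$, and $\mathbf{B}$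 is the group generated by $\{\bar{B}\in\mathbf{L}:\bar{B}\bar{P}\bar{B}^\dagger\in\mathbf{L}_\downarrow\text{ for all }\bar{P}\in\mathbf{P}_\downarrow\}$. The code family is $\mathbf{B}$-constrained if $\mathbf{B}$ is not universal. A set of logical operators (or of implementations of them) is universal if the logical operators it implements generate a universal gate set on the logical qubits (dense in the logical unitary group up to phase). *)

theory Defs
  imports Complex_Main "Jordan_Normal_Form.Matrix"
begin

text \<open>Operators on n qubits are 2^n x 2^n complex matrices; the computational basis index
  x < 2^n encodes the qubit values, qubit j being bit j of x.\<close>

definition dag :: "complex mat \<Rightarrow> complex mat" where
  "dag A = mat (dim_col A) (dim_row A) (\<lambda>(i,j). cnj (A $$ (j,i)))"

definition is_unitary :: "nat \<Rightarrow> complex mat \<Rightarrow> bool" where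
  "is_unitary N U \<longleftrightarrow> U \<in> carrier_mat N N \<and> dag U * U = 1\<^sub>m N \<and> U * dag U = 1\<^sub>m N"

text \<open>Single-qubit Pauli matrices: 0 = I, 1 = X, 2 = Y, 3 = Z; entries indexed by bits.\<close>
definition pauli1 :: "nat \<Rightarrow> bool \<Rightarrow> bool \<Rightarrow> complex" where
  "pauli1 a r c =
     (if a = 0 then (if r = c then 1 else 0)
      else if a = 1 then (if r \<noteq> c then 1 else 0)
      else if a = 2 then (if r = c then 0 else if r then \<i> else - \<i>)
      else (if r = c then (if r then -1 else 1) else 0))"

text \<open>The Pauli string c * sigma_{a 0} (x) ... (x) sigma_{a (n-1)}, with the tensor product
  written out entrywise.\<close>
definition pauli_string :: "nat \<Rightarrow> complex \<Rightarrow> (nat \<Rightarrow> nat) \<Rightarrow> complex mat" where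
  "pauli_string n c a =
     mat (2^n) (2^n) (\<lambda>(x,y). c * (\<Prod>j<n. pauli1 (a j) (bit x j) (bit y j)))"

definition pauli_group :: "nat \<Rightarrow> complex mat set" where
  "pauli_group n = {pauli_string n c a | c a. c \<in> {1, -1, \<i>, - \<i>} \<and> (\<forall>j<n. a j < 4)}"

text \<open>O acts trivially on qubit j iff O = I_j (x) O' for an operator O' on the other qubits,
  i.e. entrywise: O vanishes between basis states differing in bit j, and its entries do not
  depend on the (common) value of bit j.\<close>
definition acts_trivially_on :: "nat \<Rightarrow> complex mat \<Rightarrow> nat \<Rightarrow> bool" where
  "acts_trivially_on n M j \<longleftrightarrow>
     (\<forall>x<2^n. \<forall>y<2^n. (bit x j \<noteq> bit y j \<longrightarrow> M $$ (x,y) = 0) \<and>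
                       M $$ (x,y) = M $$ (flip_bit j x, flip_bit j y))"

definition weight :: "nat \<Rightarrow> complex mat \<Rightarrow> nat" where
  "weight n M = card {j. j < n \<and> \<not> acts_trivially_on n M j}"

definition is_channel :: "nat \<Rightarrow> complex mat list \<Rightarrow> bool" where
  "is_channel n Ks \<longleftrightarrow> (\<forall>K\<in>set Ks. K \<in> carrier_mat (2^n) (2^n)) \<and>
     foldr (\<lambda>K acc. dag K * K + acc) Ks (0\<^sub>m (2^n) (2^n)) = 1\<^sub>m (2^n)"

definition apply_channel :: "nat \<Rightarrow> complex mat list \<Rightarrow> complex mat \<Rightarrow> complex mat" where
  "apply_channel n Ks U = foldr (\<lambda>K acc. K * U * dag K + acc) Ks (0\<^sub>m (2^n) (2^n))"

text \<open>A code with n physical and k logical qubits is given by its stabiliser group S and an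
  encoding isometry Enc (2^n x 2^k) onto the code space. Logical operators are unitaries on the
  k logical qubits; an n-qubit operator U represents the logical operator Ubar iff it acts as
  Ubar on the code space: U Enc = Enc Ubar.\<close>

definition code_space :: "nat \<Rightarrow> complex mat set \<Rightarrow> complex vec set" where
  "code_space n S = {\<psi> \<in> carrier_vec (2^n). \<forall>g\<in>S. g *\<^sub>v \<psi> = \<psi>}"

definition representative :: "nat \<Rightarrow> nat \<Rightarrow> complex mat \<Rightarrow> complex mat \<Rightarrow> complex mat \<Rightarrow> bool" where
  "representative n k Enc U Ubar \<longleftrightarrow>
     U \<in> carrier_mat (2^n) (2^n) \<and> Ubar \<in> carrier_mat (2^k) (2^k) \<and> U * Enc = Enc * Ubar"

definition logical_ops :: "nat \<Rightarrow> complex mat set" where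
  "logical_ops k = {U. is_unitary (2^k) U}"

definition stab_code :: "nat \<Rightarrow> nat \<Rightarrow> complex mat set \<Rightarrow> complex mat \<Rightarrow> bool" where
  "stab_code n k S Enc \<longleftrightarrow>
     S \<subseteq> pauli_group n \<and> 1\<^sub>m (2^n) \<in> S \<and> (\<forall>g\<in>S. \<forall>h\<in>S. g * h \<in> S) \<and>
     (\<forall>g\<in>S. \<forall>h\<in>S. g * h = h * g) \<and> - 1\<^sub>m (2^n) \<notin> S \<and>
     Enc \<in> carrier_mat (2^n) (2^k) \<and> dag Enc * Enc = 1\<^sub>m (2^k) \<and>
     {Enc *\<^sub>v v | v. v \<in> carrier_vec (2^k)} = code_space n S \<and>
     (\<forall>P\<in>pauli_group k. \<exists>E\<in>pauli_group n. representative n k Enc E P)"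

definition log_dist :: "nat \<Rightarrow> nat \<Rightarrow> complex mat \<Rightarrow> complex mat \<Rightarrow> nat" where
  "log_dist n k Enc L = (LEAST w. \<exists>U. representative n k Enc U L \<and> weight n U = w)"

definition code_dist :: "nat \<Rightarrow> complex mat set \<Rightarrow> nat" where
  "code_dist n S = (LEAST w. \<exists>E\<in>pauli_group n. weight n E = w \<and> (\<forall>g\<in>S. E * g = g * E) \<and>
                        E \<notin> {c \<cdot>\<^sub>m g | c g. g \<in> S})"

text \<open>A code family: for each l, a stabiliser code on nf l physical qubits with stabiliser group
  Sf l and encoding Encf l, all with the same number k of logical qubits.\<close>

definition L_down :: "(nat \<Rightarrow> nat) \<Rightarrow> nat \<Rightarrow> (nat \<Rightarrow> complex mat set) \<Rightarrow> (nat \<Rightarrow> complex mat) \<Rightarrow> complex mat set" where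
  "L_down nf k Sf Encf = {L \<in> logical_ops k. \<exists>C::real. \<forall>l.
      real (log_dist (nf l) k (Encf l) L) / real (code_dist (nf l) (Sf l)) \<le> C}"

definition P_down :: "(nat \<Rightarrow> nat) \<Rightarrow> nat \<Rightarrow> (nat \<Rightarrow> complex mat set) \<Rightarrow> (nat \<Rightarrow> complex mat) \<Rightarrow> complex mat set" where
  "P_down nf k Sf Encf = L_down nf k Sf Encf \<inter> pauli_group k"

definition B_gens :: "(nat \<Rightarrow> nat) \<Rightarrow> nat \<Rightarrow> (nat \<Rightarrow> complex mat set) \<Rightarrow> (nat \<Rightarrow> complex mat) \<Rightarrow> complex mat set" where
  "B_gens nf k Sf Encf = {B \<in> logical_ops k. \<forall>P\<in>P_down nf k Sf Encf.
      B * P * dag B \<in> L_down nf k Sf Encf}"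

inductive_set gen_group :: "nat \<Rightarrow> complex mat set \<Rightarrow> complex mat set" for k X where
  gen_one: "1\<^sub>m (2^k) \<in> gen_group k X"
| gen_base: "x \<in> X \<Longrightarrow> x \<in> gen_group k X"
| gen_mult: "a \<in> gen_group k X \<Longrightarrow> b \<in> gen_group k X \<Longrightarrow> a * b \<in> gen_group k X"
| gen_inv: "a \<in> gen_group k X \<Longrightarrow> dag a \<in> gen_group k X"

definition mat_dist :: "complex mat \<Rightarrow> complex mat \<Rightarrow> real" where
  "mat_dist A B = sqrt (\<Sum>i<dim_row A. \<Sum>j<dim_col A. (cmod (A $$ (i,j) - B $$ (i,j)))^2)"

definition universal :: "nat \<Rightarrow> complex mat set \<Rightarrow> bool" where
  "universal k X \<longleftrightarrow> (\<forall>V\<in>logical_ops k. \<forall>\<epsilon>>0. \<exists>g\<in>gen_group k X. \<exists>c::complex.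
      cmod c = 1 \<and> mat_dist (c \<cdot>\<^sub>m g) V < \<epsilon>)"

definition B_constrained :: "(nat \<Rightarrow> nat) \<Rightarrow> nat \<Rightarrow> (nat \<Rightarrow> complex mat set) \<Rightarrow> (nat \<Rightarrow> complex mat) \<Rightarrow> bool" where
  "B_constrained nf k Sf Encf \<longleftrightarrow> \<not> universal k (B_gens nf k Sf Encf)"

definition implements :: "nat \<Rightarrow> nat \<Rightarrow> complex mat \<Rightarrow> complex mat list \<Rightarrow> complex mat \<Rightarrow> bool" where
  "implements n k Enc Ks A \<longleftrightarrow> is_channel n Ks \<and> A \<in> logical_ops k \<and>
     (\<forall>U\<in>logical_ops k. \<forall>U'. representative n k Enc U' U \<longrightarrow>
        representative n k Enc (apply_channel n Ks U') (A * U * dag A))"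

text \<open>s_A = max over E in P_n of wt(A(E))/wt(E); bounded spread: s_A \<le> C for all l.\<close>
definition bounded_spread :: "(nat \<Rightarrow> nat) \<Rightarrow> (nat \<Rightarrow> complex mat list) \<Rightarrow> bool" where
  "bounded_spread nf Af \<longleftrightarrow> (\<exists>C::real. \<forall>l. \<forall>E\<in>pauli_group (nf l).
      real (weight (nf l) (apply_channel (nf l) (Af l) E)) / real (weight (nf l) E) \<le> C)"

end

theory Submission
  imports Defs "HOL-Library.FuncSet"
begin


lemma bit_lt_pow: "(x::nat) < 2^n \<Longrightarrow> n \<le> j \<Longrightarrow> \<not> bit x j"
  by (metis bit_take_bit_iff not_le take_bit_nat_eq_self_iff)

lemma lt_pow_bits: "(\<forall>j\<ge>n. \<not> bit (x::nat) j) \<Longrightarrow> x < 2^n"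
  by (metis bit_take_bit_iff bit_eq_iff take_bit_nat_eq_self_iff not_le)

lemma bits_eq_lt: "(x::nat) < 2^n \<Longrightarrow> y < 2^n \<Longrightarrow> (\<forall>j<n. bit x j = bit y j) \<longleftrightarrow> x = y"
  by (metis bit_eq_iff bit_lt_pow not_le)

lemma flip_lt: "(x::nat) < 2^n \<Longrightarrow> j < n \<Longrightarrow> flip_bit j x < 2^n"
  apply (rule lt_pow_bits) using bit_lt_pow by (auto simp: bit_flip_bit_iff)

lemma flip_flip: "flip_bit j (flip_bit j (x::nat)) = x"
  by (rule bit_eq_iff[THEN iffD2]) (auto simp: bit_flip_bit_iff)



lemma sum_double: "(\<Sum>z<2*(m::nat). g z) = (\<Sum>w<m. g (2*w) + g (2*w+1))"
  by (induction m) (auto simp: add.assoc)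

lemma sum_bits_prod:
  fixes f :: "nat \<Rightarrow> bool \<Rightarrow> 'a::comm_semiring_1"
  shows "(\<Sum>z<(2::nat)^n. \<Prod>j<n. f j (bit z j)) = (\<Prod>j<n. f j False + f j True)"
proof (induction n arbitrary: f)
  case 0 then show ?case by simp
next
  case (Suc n)
  have "(\<Sum>z<(2::nat)^Suc n. \<Prod>j<Suc n. f j (bit z j))
      = (\<Sum>w<(2::nat)^n. (\<Prod>j<Suc n. f j (bit (2*w) j)) + (\<Prod>j<Suc n. f j (bit (2*w+1) j)))"
    by (simp add: sum_double)
  also have "\<dots> = (\<Sum>w<(2::nat)^n. (f 0 False + f 0 True) * (\<Prod>j<n. f (Suc j) (bit w j)))"
    apply (rule sum.cong, simp)
    apply (simp only: prod.lessThan_Suc_shift)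
    apply (simp add: bit_Suc bit_0 algebra_simps)
    done
  also have "\<dots> = (f 0 False + f 0 True) * (\<Prod>j<n. f (Suc j) False + f (Suc j) True)"
    by (simp add: sum_distrib_left[symmetric] Suc.IH[of "\<lambda>j. f (Suc j)"])
  also have "\<dots> = (\<Prod>j<Suc n. f j False + f j True)"
    by (simp only: prod.lessThan_Suc_shift)
  finally show ?case .
qed

definition pp :: "nat \<Rightarrow> nat \<Rightarrow> bool \<Rightarrow> bool \<Rightarrow> complex" where
  "pp a b r s = pauli1 a r False * pauli1 b False s + pauli1 a r True * pauli1 b True s"

definition eps :: "nat \<Rightarrow> nat \<Rightarrow> complex" where
  "eps a b = (if a = 0 \<or> b = 0 \<or> min a 3 = min b 3 then 1 else -1)"

lemma nat_cases4: "(a::nat) = 0 \<or> a = 1 \<or> a = 2 \<or> a \<ge> 3" by auto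

lemma pp_comm: "pp a b r s = eps a b * pp b a r s"
  using nat_cases4[of a] nat_cases4[of b]
  by (cases r; cases s) (auto simp: pp_def eps_def pauli1_def)

lemma pp_self: "pp a a r s = (if r = s then 1 else 0)"
  using nat_cases4[of a]
  by (cases r; cases s) (auto simp: pp_def pauli1_def)

lemma pauli1_cnj: "cnj (pauli1 a r s) = pauli1 a s r"
  using nat_cases4[of a]
  by (cases r; cases s) (auto simp: pauli1_def)

lemma eps_pm: "eps a b = 1 \<or> eps a b = -1" by (simp add: eps_def)

lemma prod_pm: "(\<forall>j\<in>A. f j = (1::complex) \<or> f j = -1) \<Longrightarrow> prod f A = 1 \<or> prod f A = -1"
proof (induction A rule: infinite_finite_induct)
  case (insert x F) then show ?case by auto
qed auto

lemma pauli_carrier[simp]: "pauli_string n c a \<in> carrier_mat (2^n) (2^n)"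
  by (simp add: pauli_string_def)

lemma pauli_dims[simp]: "dim_row (pauli_string n c a) = 2^n" "dim_col (pauli_string n c a) = 2^n"
  by (simp_all add: pauli_string_def)

lemma pauli_index: "x < 2^n \<Longrightarrow> y < 2^n \<Longrightarrow>
  pauli_string n c a $$ (x,y) = c * (\<Prod>j<n. pauli1 (a j) (bit x j) (bit y j))"
  by (simp add: pauli_string_def)

lemma mult_index: "A \<in> carrier_mat m N \<Longrightarrow> B \<in> carrier_mat N p \<Longrightarrow> x < m \<Longrightarrow> y < p \<Longrightarrow>
  (A * B) $$ (x,y) = (\<Sum>z<N. A $$ (x,z) * B $$ (z,y))"
  by (simp add: scalar_prod_def lessThan_atLeast0)

lemma pauli_mult_index:
  assumes "x < 2^n" "y < 2^n"
  shows "(pauli_string n c a * pauli_string n d b) $$ (x,y) = c * d * (\<Prod>j<n. pp (a j) (b j) (bit x j) (bit y j))"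
proof -
  have "(pauli_string n c a * pauli_string n d b) $$ (x,y)
     = (\<Sum>z<(2::nat)^n. (c * (\<Prod>j<n. pauli1 (a j) (bit x j) (bit z j))) * (d * (\<Prod>j<n. pauli1 (b j) (bit z j) (bit y j))))"
    using assms by (subst mult_index[of _ "2^n" "2^n" _ "2^n"]) (simp_all add: pauli_index)
  also have "\<dots> = c * d * (\<Sum>z<(2::nat)^n. \<Prod>j<n. pauli1 (a j) (bit x j) (bit z j) * pauli1 (b j) (bit z j) (bit y j))"
    by (simp add: sum_distrib_left prod.distrib algebra_simps)
  also have "\<dots> = c * d * (\<Prod>j<n. pp (a j) (b j) (bit x j) (bit y j))"
    by (subst sum_bits_prod) (simp add: pp_def)
  finally show ?thesis .
qed

lemma pauli_comm:
  "pauli_string n c a * pauli_string n d b = (\<Prod>j<n. eps (a j) (b j)) \<cdot>\<^sub>m (pauli_string n d b * pauli_string n c a)"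
proof (rule eq_matI)
  fix x y assume "x < dim_row ((\<Prod>j<n. eps (a j) (b j)) \<cdot>\<^sub>m (pauli_string n d b * pauli_string n c a))"
    "y < dim_col ((\<Prod>j<n. eps (a j) (b j)) \<cdot>\<^sub>m (pauli_string n d b * pauli_string n c a))"
  then have xy: "x < 2^n" "y < 2^n" by auto
  show "(pauli_string n c a * pauli_string n d b) $$ (x, y) =
         ((\<Prod>j<n. eps (a j) (b j)) \<cdot>\<^sub>m (pauli_string n d b * pauli_string n c a)) $$ (x, y)"
    using xy apply (subst index_smult_mat, simp, simp)
    apply (simp only: pauli_mult_index)
    apply (subst pp_comm)
    apply (simp add: prod.distrib)
    done
qed auto

lemma prod_ind: "(\<Prod>j<(n::nat). if P j then 1 else 0 :: complex) = (if \<forall>j<n. P j then 1 else 0)"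
  by (induction n) (auto simp: less_Suc_eq)

lemma pauli_sq: "pauli_string n 1 a * pauli_string n 1 a = 1\<^sub>m (2^n)"
proof (rule eq_matI)
  fix x y assume "x < dim_row (1\<^sub>m (2 ^ n))" "y < dim_col (1\<^sub>m (2 ^ n))"
  then have xy: "x < 2^n" "y < 2^n" by auto
  have "(\<Prod>j<n. pp (a j) (a j) (bit x j) (bit y j)) = (if \<forall>j<n. bit x j = bit y j then 1 else 0)"
    by (simp add: pp_self prod_ind)
  then show "(pauli_string n 1 a * pauli_string n 1 a) $$ (x, y) = 1\<^sub>m (2 ^ n) $$ (x, y)"
    using xy bits_eq_lt[OF xy] by (simp only: pauli_mult_index[OF xy]) simp
qed auto

lemma pauli_smult: "pauli_string n c a = c \<cdot>\<^sub>m pauli_string n 1 a"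
  by (rule eq_matI) (auto simp: pauli_index)

lemma dag_pauli: "dag (pauli_string n c a) = pauli_string n (cnj c) a"
  by (rule eq_matI) (auto simp: dag_def pauli_index pauli1_cnj)



definition Lab :: "nat \<Rightarrow> (nat \<Rightarrow> nat) set" where
  "Lab n = PiE {..<n} (\<lambda>_. {..<4})"

lemma finite_Lab[simp]: "finite (Lab n)"
  by (simp add: Lab_def finite_PiE)

lemma sum4: "(\<Sum>i<4::nat. f i) = f 0 + f 1 + f 2 + (f 3 :: complex)"
  by (simp add: numeral_eq_Suc lessThan_Suc)

lemma single_orth: "(\<Sum>i<4. cnj (pauli1 i r' s') * pauli1 i r s) = (if r' = r \<and> s' = s then 2 else 0)"
  by (cases r; cases s; cases r'; cases s') (auto simp: sum4 pauli1_def)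

lemma orth:
  assumes "x < 2^n" "y < 2^n" "x' < 2^n" "y' < 2^n"
  shows "(\<Sum>a\<in>Lab n. cnj (pauli_string n 1 a $$ (x',y')) * pauli_string n 1 a $$ (x,y))
         = (if x' = x \<and> y' = y then 2^n else 0)"
proof -
  have "(\<Sum>a\<in>Lab n. cnj (pauli_string n 1 a $$ (x',y')) * pauli_string n 1 a $$ (x,y))
     = (\<Sum>a\<in>Lab n. \<Prod>j<n. cnj (pauli1 (a j) (bit x' j) (bit y' j)) * pauli1 (a j) (bit x j) (bit y j))"
    using assms by (simp add: pauli_index cnj_prod prod.distrib)
  also have "\<dots> = (\<Prod>j<n. \<Sum>i<4. cnj (pauli1 i (bit x' j) (bit y' j)) * pauli1 i (bit x j) (bit y j))"
    unfolding Lab_def by (rule prod_sum_PiE[symmetric]) auto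
  also have "\<dots> = (\<Prod>j<n. if bit x' j = bit x j \<and> bit y' j = bit y j then 2 else 0)"
    by (simp add: single_orth)
  also have "\<dots> = (if \<forall>j<n. bit x' j = bit x j \<and> bit y' j = bit y j then 2^n else 0)"
    by (induction n) (auto simp: less_Suc_eq)
  also have "\<dots> = (if x' = x \<and> y' = y then 2^n else 0)"
    using bits_eq_lt[OF assms(3,1)] bits_eq_lt[OF assms(4,2)] by metis
  finally show ?thesis .
qed

definition coef :: "nat \<Rightarrow> complex mat \<Rightarrow> (nat \<Rightarrow> nat) \<Rightarrow> complex" where
  "coef n U a = (\<Sum>x<2^n. \<Sum>y<2^n. cnj (pauli_string n 1 a $$ (x,y)) * U $$ (x,y))"

lemma swap3: "(\<Sum>a\<in>A. \<Sum>x\<in>B. \<Sum>y\<in>C. f a x y) = (\<Sum>x\<in>B. \<Sum>y\<in>C. \<Sum>a\<in>A. f a x y)"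
proof -
  have "(\<Sum>a\<in>A. \<Sum>x\<in>B. \<Sum>y\<in>C. f a x y) = (\<Sum>x\<in>B. \<Sum>a\<in>A. \<Sum>y\<in>C. f a x y)" by (rule sum.swap)
  also have "\<dots> = (\<Sum>x\<in>B. \<Sum>y\<in>C. \<Sum>a\<in>A. f a x y)" by (rule sum.cong[OF refl], rule sum.swap)
  finally show ?thesis .
qed

lemma sum_if_mult: "y < (N::nat) \<Longrightarrow> (\<Sum>y'<N. f y' * (if y' = y then c else 0)) = f y * (c::complex)"
proof -
  assume y: "y < N"
  have "(\<Sum>y'<N. f y' * (if y' = y then c else 0)) = (\<Sum>y'<N. if y' = y then f y' * c else 0)"
    by (rule sum.cong) auto
  also have "\<dots> = f y * c" using y by (simp add: sum.delta)
  finally show ?thesis .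
qed

lemma expansion:
  assumes "x < 2^n" "y < 2^n"
  shows "U $$ (x,y) = (1 / 2^n) * (\<Sum>a\<in>Lab n. coef n U a * pauli_string n 1 a $$ (x,y))"
proof -
  have "(\<Sum>a\<in>Lab n. coef n U a * pauli_string n 1 a $$ (x,y))
    = (\<Sum>x'<2^n. \<Sum>y'<2^n. U $$ (x',y') * (\<Sum>a\<in>Lab n. cnj (pauli_string n 1 a $$ (x',y')) * pauli_string n 1 a $$ (x,y)))"
  proof -
    have "(\<Sum>a\<in>Lab n. coef n U a * pauli_string n 1 a $$ (x,y))
      = (\<Sum>a\<in>Lab n. \<Sum>x'<2^n. \<Sum>y'<2^n. cnj (pauli_string n 1 a $$ (x',y')) * U $$ (x',y') * pauli_string n 1 a $$ (x,y))"
      unfolding coef_def sum_distrib_right by simp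
    also have "\<dots> = (\<Sum>x'<2^n. \<Sum>y'<2^n. \<Sum>a\<in>Lab n. cnj (pauli_string n 1 a $$ (x',y')) * U $$ (x',y') * pauli_string n 1 a $$ (x,y))"
      by (rule swap3)
    also have "\<dots> = (\<Sum>x'<2^n. \<Sum>y'<2^n. U $$ (x',y') * (\<Sum>a\<in>Lab n. cnj (pauli_string n 1 a $$ (x',y')) * pauli_string n 1 a $$ (x,y)))"
      by (intro sum.cong refl) (simp add: sum_distrib_left algebra_simps)
    finally show ?thesis .
  qed
  also have "\<dots> = (\<Sum>x'<2^n. \<Sum>y'<2^n. U $$ (x',y') * (if x' = x \<and> y' = y then 2^n else 0))"
    using assms by (intro sum.cong refl) (simp add: orth)
  also have "\<dots> = (\<Sum>x'<2^n. U $$ (x',y) * (if x' = x then 2^n else 0))"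
    using assms(2) by (intro sum.cong refl) (auto simp: sum_if_mult)
  also have "\<dots> = 2^n * U $$ (x,y)"
    using assms by (simp add: sum_if_mult)
  finally show ?thesis by simp
qed

lemma sum_flip: "j < n \<Longrightarrow> (\<Sum>x<(2::nat)^n. g (flip_bit j x)) = (\<Sum>x<2^n. (g x :: complex))"
  by (rule sum.reindex_bij_witness[where i="flip_bit j" and j="flip_bit j"])
     (auto simp: flip_flip flip_lt)

lemma p_flip: "a \<noteq> 0 \<Longrightarrow> pauli1 a (\<not> r) (\<not> r) = - pauli1 a r r"
  using nat_cases4[of a] by (cases r) (auto simp: pauli1_def)

lemma pauli_flip_diag:
  assumes "x < 2^n" "y < 2^n" "j < n" "a j \<noteq> 0" "bit x j = bit y j"
  shows "pauli_string n 1 a $$ (flip_bit j x, flip_bit j y) = - pauli_string n 1 a $$ (x,y)"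
proof -
  have j: "j \<in> {..<n}" using assms by simp
  have o: "(\<Prod>i\<in>{..<n}-{j}. pauli1 (a i) (bit (flip_bit j x) i) (bit (flip_bit j y) i))
      = (\<Prod>i\<in>{..<n}-{j}. pauli1 (a i) (bit x i) (bit y i))"
    by (rule prod.cong) (auto simp: bit_flip_bit_iff)
  show ?thesis
    using assms flip_lt[OF assms(1,3)] flip_lt[OF assms(2,3)]
    apply (simp add: pauli_index)
    apply (simp add: prod.remove[OF _ j] o)
    apply (simp add: bit_flip_bit_iff p_flip)
    done
qed

lemma coef_trivial:
  assumes U: "acts_trivially_on n U j" and j: "j < n" and a: "a j \<noteq> 0"
  shows "coef n U a = 0"
proof -
  define t where "t x y = cnj (pauli_string n 1 a $$ (x,y)) * U $$ (x,y)" for x y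
  have key: "t (flip_bit j x) (flip_bit j y) = - t x y" if xy: "x < 2^n" "y < 2^n" for x y
  proof (cases "bit x j = bit y j")
    case True
    have "U $$ (flip_bit j x, flip_bit j y) = U $$ (x,y)"
      using U xy unfolding acts_trivially_on_def by metis
    then show ?thesis using pauli_flip_diag[of x n y j a, OF xy j a True] by (simp add: t_def)
  next
    case False
    have fl: "x < 2^n" "y < 2^n" "flip_bit j x < 2^n" "flip_bit j y < 2^n" using xy flip_lt j by auto
    have "bit (flip_bit j x) j \<noteq> bit (flip_bit j y) j" using False by (simp add: bit_flip_bit_iff)
    then have "U $$ (x,y) = 0" "U $$ (flip_bit j x, flip_bit j y) = 0"
      using U fl False unfolding acts_trivially_on_def by blast+
    then show ?thesis by (simp add: t_def)
  qed
  have "coef n U a = (\<Sum>x<2^n. \<Sum>y<2^n. t x y)" by (simp add: coef_def t_def)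
  also have "\<dots> = (\<Sum>x<2^n. \<Sum>y<2^n. t (flip_bit j x) (flip_bit j y))"
  proof -
    have "(\<Sum>x<2^n. \<Sum>y<2^n. t (flip_bit j x) (flip_bit j y)) = (\<Sum>x<2^n. \<Sum>y<2^n. t (flip_bit j x) y)"
      by (rule sum.cong[OF refl], rule sum_flip[OF j])
    also have "\<dots> = (\<Sum>x<2^n. \<Sum>y<2^n. t x y)"
      using j by (rule sum_flip)
    finally show ?thesis by simp
  qed
  also have "\<dots> = - (\<Sum>x<2^n. \<Sum>y<2^n. t x y)"
    by (simp add: key sum_negf)
  finally show ?thesis by (simp add: coef_def t_def)
qed



section \<open>dagger\<close>

lemma dag_carrier[simp]: "A \<in> carrier_mat r c \<Longrightarrow> dag A \<in> carrier_mat c r"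
  by (simp add: dag_def)

lemma dag_dims[simp]: "dim_row (dag A) = dim_col A" "dim_col (dag A) = dim_row A"
  by (simp_all add: dag_def)

lemma dag_index[simp]: "i < dim_col A \<Longrightarrow> j < dim_row A \<Longrightarrow> dag A $$ (i,j) = cnj (A $$ (j,i))"
  by (simp add: dag_def)

lemma dag_dag[simp]: "dag (dag A) = A"
  by (rule eq_matI) auto

lemma dag_mult: "A \<in> carrier_mat r m \<Longrightarrow> B \<in> carrier_mat m c \<Longrightarrow> dag (A * B) = dag B * dag A"
  by (rule eq_matI) (auto simp: scalar_prod_def cnj_sum ac_simps intro!: sum.cong)

lemma dag_smult: "dag (s \<cdot>\<^sub>m A) = cnj s \<cdot>\<^sub>m dag A"
  by (rule eq_matI) auto

lemma dag_one[simp]: "dag (1\<^sub>m N) = 1\<^sub>m N"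
  by (rule eq_matI) auto

lemma smult_smult_mat: "a \<cdot>\<^sub>m (b \<cdot>\<^sub>m A) = (a * b :: complex) \<cdot>\<^sub>m A"
  by (rule eq_matI) auto

lemma smult_mult_smult: "A \<in> carrier_mat r m \<Longrightarrow> B \<in> carrier_mat m c \<Longrightarrow>
  (s \<cdot>\<^sub>m A) * (t \<cdot>\<^sub>m B) = (s * t :: complex) \<cdot>\<^sub>m (A * B)"
  by (simp add: mult_smult_assoc_mat[of _ r m] mult_smult_distrib[of _ r m] smult_smult_mat mult.commute)

lemma mult_smult_r: "A \<in> carrier_mat r m \<Longrightarrow> B \<in> carrier_mat m c \<Longrightarrow>
  A * (t \<cdot>\<^sub>m B) = (t :: complex) \<cdot>\<^sub>m (A * B)"
  by (rule mult_smult_distrib)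

lemma mult_smult_l: "A \<in> carrier_mat r m \<Longrightarrow> B \<in> carrier_mat m c \<Longrightarrow>
  (t \<cdot>\<^sub>m A) * B = (t :: complex) \<cdot>\<^sub>m (A * B)"
  by (rule mult_smult_assoc_mat)

lemma smult_one_mat[simp]: "(1::complex) \<cdot>\<^sub>m A = A"
  by (rule eq_matI) auto

section \<open>trace\<close>

definition tr :: "complex mat \<Rightarrow> complex" where
  "tr A = (\<Sum>i<dim_row A. A $$ (i,i))"

lemma tr_cyclic:
  assumes A: "A \<in> carrier_mat r c" and B: "B \<in> carrier_mat c r"
  shows "tr (A * B) = tr (B * A)"
proof -
  have dr: "dim_row (A * B) = r" "dim_row (B * A) = c" using A B by auto
  have "tr (A * B) = (\<Sum>i<r. \<Sum>z<c. A $$ (i,z) * B $$ (z,i))"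
    using A B dr by (simp add: tr_def mult_index[OF A B] del: index_mult_mat)
  also have "\<dots> = (\<Sum>z<c. \<Sum>i<r. B $$ (z,i) * A $$ (i,z))"
    by (subst sum.swap) (simp add: ac_simps)
  also have "\<dots> = tr (B * A)"
    using A B dr by (simp add: tr_def mult_index[OF B A] del: index_mult_mat)
  finally show ?thesis .
qed

lemma tr_one[simp]: "tr (1\<^sub>m N) = of_nat N"
  by (simp add: tr_def)

lemma tr_smult: "A \<in> carrier_mat N N \<Longrightarrow> tr (s \<cdot>\<^sub>m A) = s * tr A"
proof -
  assume A: "A \<in> carrier_mat N N"
  then have d: "dim_row A = N" "dim_col A = N" by auto
  show ?thesis unfolding tr_def sum_distrib_left by (rule sum.cong) (simp_all add: d)
qed

section \<open>Pauli facts\<close>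

definition phases :: "complex set" where "phases = {1, -1, \<i>, - \<i>}"

lemma phase_cnj_mult: "c \<in> phases \<Longrightarrow> cnj c * c = 1"
  by (auto simp: phases_def)

lemma dag_pauli': "dag (pauli_string n c a) = cnj c \<cdot>\<^sub>m pauli_string n 1 a"
  by (simp add: dag_pauli pauli_smult[of n "cnj c"])

lemma pauli_unitary:
  assumes "c \<in> phases"
  shows "dag (pauli_string n c a) * pauli_string n c a = 1\<^sub>m (2^n)"
    "pauli_string n c a * dag (pauli_string n c a) = 1\<^sub>m (2^n)"
proof -
  have "dag (pauli_string n c a) * pauli_string n c a = (cnj c * c) \<cdot>\<^sub>m (pauli_string n 1 a * pauli_string n 1 a)"
    apply (simp only: dag_pauli')
    apply (subst pauli_smult[of n c])
    apply (rule smult_mult_smult[OF pauli_carrier pauli_carrier])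
    done
  then show "dag (pauli_string n c a) * pauli_string n c a = 1\<^sub>m (2^n)"
    using assms by (simp add: pauli_sq phase_cnj_mult)
  have "pauli_string n c a * dag (pauli_string n c a) = (cnj c * c) \<cdot>\<^sub>m (pauli_string n 1 a * pauli_string n 1 a)"
    apply (simp only: dag_pauli')
    apply (subst pauli_smult[of n c])
    apply (simp add: smult_mult_smult[OF pauli_carrier pauli_carrier] mult.commute)
    done
  then show "pauli_string n c a * dag (pauli_string n c a) = 1\<^sub>m (2^n)"
    using assms by (simp add: pauli_sq phase_cnj_mult)
qed

lemma pauli_groupE:
  assumes "P \<in> pauli_group n"
  obtains c a where "P = pauli_string n c a" "c \<in> phases" "\<forall>j<n. a j < 4"
  using assms unfolding pauli_group_def phases_def by blast

definition scomm :: "complex mat \<Rightarrow> complex mat \<Rightarrow> bool" where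
  "scomm A B \<longleftrightarrow> (\<exists>s. (s = 1 \<or> s = -1) \<and> A * B = s \<cdot>\<^sub>m (B * A))"

lemma scomm_pauli: "scomm (pauli_string n c a) (pauli_string n d b)"
proof -
  have "(\<Prod>j<n. eps (a j) (b j)) = 1 \<or> (\<Prod>j<n. eps (a j) (b j)) = -1"
    by (rule prod_pm) (simp add: eps_pm)
  then show ?thesis unfolding scomm_def
    by (intro exI[of _ "\<Prod>j<n. eps (a j) (b j)"] conjI[OF _ pauli_comm[of n c a d b]])
qed

lemma scomm_mult:
  assumes A: "A \<in> carrier_mat N N" and B: "B \<in> carrier_mat N N" and G: "G \<in> carrier_mat N N"
    and sa: "scomm A G" and sb: "scomm B G"
  shows "scomm (A * B) G"
proof -
  obtain s where s: "s = 1 \<or> s = -1" "A * G = s \<cdot>\<^sub>m (G * A)" using sa scomm_def by blast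
  obtain t where t: "t = 1 \<or> t = -1" "B * G = t \<cdot>\<^sub>m (G * B)" using sb scomm_def by blast
  have GB: "G * B \<in> carrier_mat N N" and GA: "G * A \<in> carrier_mat N N" using G A B by auto
  have e1: "(A * B) * G = A * (B * G)" by (rule assoc_mult_mat[OF A B G])
  have e2: "A * (B * G) = t \<cdot>\<^sub>m (A * (G * B))" unfolding t(2) by (rule mult_smult_r[OF A GB])
  have e3: "A * (G * B) = (A * G) * B" by (rule assoc_mult_mat[OF A G B, symmetric])
  have e4: "(A * G) * B = s \<cdot>\<^sub>m ((G * A) * B)" unfolding s(2) by (rule mult_smult_l[OF GA B])
  have e5: "(G * A) * B = G * (A * B)" by (rule assoc_mult_mat[OF G A B])
  have pr: "(A * B) * G = (t * s) \<cdot>\<^sub>m (G * (A * B))"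
    unfolding e1 e2 e3 e4 e5 smult_smult_mat ..
  have ts: "t * s = 1 \<or> t * s = -1" using s(1) t(1) by auto
  show ?thesis unfolding scomm_def
    by (rule exI[of _ "t * s"], rule conjI[OF ts pr])
qed

lemma scomm_pauli_group:
  "P \<in> pauli_group n \<Longrightarrow> Q \<in> pauli_group n \<Longrightarrow> scomm P Q"
proof -
  assume "P \<in> pauli_group n" "Q \<in> pauli_group n"
  then obtain c a d b where "P = pauli_string n c a" "Q = pauli_string n d b"
    by (metis pauli_groupE)
  then show ?thesis using scomm_pauli by metis
qed

lemma pauli_group_unitary:
  assumes "P \<in> pauli_group n"
  shows "P \<in> carrier_mat (2^n) (2^n)" "dag P * P = 1\<^sub>m (2^n)" "P * dag P = 1\<^sub>m (2^n)"
proof -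
  obtain c a where "P = pauli_string n c a" "c \<in> phases" using assms by (rule pauli_groupE)
  then show "P \<in> carrier_mat (2^n) (2^n)" "dag P * P = 1\<^sub>m (2^n)" "P * dag P = 1\<^sub>m (2^n)"
    by (simp_all add: pauli_unitary)
qed



definition Xop :: "nat \<Rightarrow> nat \<Rightarrow> complex mat" where
  "Xop k j = pauli_string k 1 (\<lambda>i. if i = j then 1 else 0)"
definition Zop :: "nat \<Rightarrow> nat \<Rightarrow> complex mat" where
  "Zop k j = pauli_string k 1 (\<lambda>i. if i = j then 3 else 0)"

lemma Z_index:
  assumes "j < k" "x < 2^k" "y < 2^k"
  shows "Zop k j $$ (x,y) = (if x = y then (if bit x j then -1 else 1) else 0)"
proof -
  have f: "pauli1 (if i = j then 3 else 0) (bit x i) (bit y i)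
     = (if bit x i = bit y i then 1 else 0) * (if i = j then (if bit x j then -1 else 1) else 1)" for i
    by (auto simp: pauli1_def)
  have "Zop k j $$ (x,y) = (\<Prod>i<k. (if bit x i = bit y i then 1 else 0) * (if i = j then (if bit x j then -1 else 1) else 1))"
    using assms by (simp add: Zop_def pauli_index f)
  also have "\<dots> = (if \<forall>i<k. bit x i = bit y i then 1 else 0) * (if bit x j then -1 else 1)"
    using assms(1) by (simp add: prod.distrib prod_ind prod.delta)
  also have "\<dots> = (if x = y then (if bit x j then -1 else 1) else 0)"
    using bits_eq_lt[OF assms(2,3)] by simp
  finally show ?thesis .
qed

lemma X_index:
  assumes "j < k" "x < 2^k" "y < 2^k"
  shows "Xop k j $$ (x,y) = (if y = flip_bit j x then 1 else 0)"
proof -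
  have f: "pauli1 (if i = j then 1 else 0) (bit x i) (bit y i)
     = (if bit y i = bit (flip_bit j x) i then 1 else 0)" for i
    by (auto simp: pauli1_def bit_flip_bit_iff)
  have "Xop k j $$ (x,y) = (\<Prod>i<k. if bit y i = bit (flip_bit j x) i then 1 else 0)"
    using assms by (simp add: Xop_def pauli_index f)
  also have "\<dots> = (if y = flip_bit j x then 1 else 0)"
    using bits_eq_lt[OF assms(3) flip_lt[OF assms(2,1)]] by (simp add: prod_ind)
  finally show ?thesis .
qed

lemma sum_if_mult2: "x < (N::nat) \<Longrightarrow> (\<Sum>z<N. (if x = z then c else 0) * f z) = c * (f x :: complex)"
proof -
  assume x: "x < N"
  have "(\<Sum>z<N. (if x = z then c else 0) * f z) = (\<Sum>z<N. if x = z then c * f z else 0)"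
    by (rule sum.cong) auto
  also have "\<dots> = c * f x" using x by (simp add: sum.delta)
  finally show ?thesis .
qed

lemma diag_const:
  fixes f :: "nat \<Rightarrow> complex"
  assumes fl: "\<And>x j. x < 2^k \<Longrightarrow> j < k \<Longrightarrow> f (flip_bit j x) = f x" and mk: "m \<le> k"
  shows "\<forall>x<2^m. f x = f 0"
  using mk
proof (induction m)
  case 0 show ?case
  proof (intro allI impI)
    fix x :: nat assume "x < 2^0"
    then have "x = 0" by simp
    then show "f x = f 0" by simp
  qed
next
  case (Suc m)
  show ?case
  proof (intro allI impI)
    fix x :: nat assume x: "x < 2^Suc m"
    have mk': "m \<le> k" using Suc.prems by simp
    have IH: "\<forall>x<2^m. f x = f 0" by (rule Suc.IH[OF mk'])
    show "f x = f 0"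
    proof (cases "x < 2^m")
      case True then show ?thesis using IH by blast
    next
      case False
      have hi: "\<not> bit x j" if "Suc m \<le> j" for j using bit_lt_pow[OF x that] .
      have bm: "bit x m"
      proof (rule ccontr)
        assume nb: "\<not> bit x m"
        have "\<forall>j\<ge>m. \<not> bit x j"
        proof (intro allI impI)
          fix j assume "m \<le> j"
          then have "j = m \<or> Suc m \<le> j" by linarith
          then show "\<not> bit x j" using nb hi by blast
        qed
        then have "x < 2^m" by (rule lt_pow_bits)
        then show False using False by simp
      qed
      have "\<forall>j\<ge>m. \<not> bit (flip_bit m x) j"
      proof (intro allI impI)
        fix j assume "m \<le> j"
        then have "j = m \<or> Suc m \<le> j" by linarith
        then show "\<not> bit (flip_bit m x) j"
        proof
          assume "j = m" then show ?thesis using bm by (simp add: bit_flip_bit_iff)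
        next
          assume "Suc m \<le> j" then show ?thesis using hi[of j] by (simp add: bit_flip_bit_iff)
        qed
      qed
      then have "flip_bit m x < 2^m" by (rule lt_pow_bits)
      then have "f (flip_bit m x) = f 0" using IH by blast
      moreover have "x < 2^k"
      proof -
        have "(2::nat)^Suc m \<le> 2^k" using Suc(2) by (rule power_increasing) simp
        then show ?thesis using x by linarith
      qed
      moreover have "m < k" using Suc(2) by simp
      ultimately show ?thesis using fl[of x m] by (simp only:)
    qed
  qed
qed

lemma scalar_if_commutes:
  assumes M: "M \<in> carrier_mat (2^k) (2^k)"
    and cz: "\<forall>j<k. M * Zop k j = Zop k j * M"
    and cx: "\<forall>j<k. M * Xop k j = Xop k j * M"
  shows "M = M $$ (0,0) \<cdot>\<^sub>m 1\<^sub>m (2^k)"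
proof -
  have ZC: "Zop k j \<in> carrier_mat (2^k) (2^k)" "Xop k j \<in> carrier_mat (2^k) (2^k)" for j
    by (simp_all add: Zop_def Xop_def)
  have off: "M $$ (x,y) = 0" if xy: "x < 2^k" "y < 2^k" "x \<noteq> y" for x y
  proof -
    obtain j where j: "j < k" "bit x j \<noteq> bit y j" using bits_eq_lt[OF xy(1,2)] xy(3) by blast
    have "(M * Zop k j) $$ (x,y) = (\<Sum>z<2^k. M $$ (x,z) * Zop k j $$ (z,y))"
      using xy(1,2) by (rule mult_index[OF M ZC(1)])
    also have "\<dots> = (\<Sum>z<2^k. M $$ (x,z) * (if z = y then (if bit y j then -1 else 1) else 0))"
      using xy j by (intro sum.cong refl) (auto simp: Z_index)
    also have "\<dots> = M $$ (x,y) * (if bit y j then -1 else 1)"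
      using xy by (simp add: sum_if_mult)
    finally have l: "(M * Zop k j) $$ (x,y) = M $$ (x,y) * (if bit y j then -1 else 1)" .
    have "(Zop k j * M) $$ (x,y) = (\<Sum>z<2^k. Zop k j $$ (x,z) * M $$ (z,y))"
      using xy(1,2) by (rule mult_index[OF ZC(1) M])
    also have "\<dots> = (\<Sum>z<2^k. (if x = z then (if bit x j then -1 else 1) else 0) * M $$ (z,y))"
      using xy j by (intro sum.cong refl) (auto simp: Z_index)
    also have "\<dots> = (if bit x j then -1 else 1) * M $$ (x,y)"
      using xy by (simp add: sum_if_mult2)
    finally have r: "(Zop k j * M) $$ (x,y) = (if bit x j then -1 else 1) * M $$ (x,y)" .
    have "M $$ (x,y) * (if bit y j then -1 else 1) = (if bit x j then -1 else 1) * M $$ (x,y)"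
      using l r cz j(1) by metis
    then show ?thesis using j(2) by (cases "bit x j") auto
  qed
  have diag1: "M $$ (flip_bit j x, flip_bit j x) = M $$ (x,x)" if xj: "x < 2^k" "j < k" for x j
  proof -
    have fx: "flip_bit j x < 2^k" using flip_lt xj by blast
    have "(M * Xop k j) $$ (x, flip_bit j x) = (\<Sum>z<2^k. M $$ (x,z) * Xop k j $$ (z, flip_bit j x))"
      using xj(1) fx by (rule mult_index[OF M ZC(2)])
    also have "\<dots> = (\<Sum>z<2^k. M $$ (x,z) * (if z = x then 1 else 0))"
      using xj fx by (intro sum.cong refl) (auto simp: X_index bit_eq_iff bit_flip_bit_iff)
    also have "\<dots> = M $$ (x,x)"
      using xj by (simp add: sum_if_mult)
    finally have l: "(M * Xop k j) $$ (x, flip_bit j x) = M $$ (x,x)" .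
    have "(Xop k j * M) $$ (x, flip_bit j x) = (\<Sum>z<2^k. Xop k j $$ (x,z) * M $$ (z, flip_bit j x))"
      using xj(1) fx by (rule mult_index[OF ZC(2) M])
    also have "\<dots> = (\<Sum>z<2^k. (if flip_bit j x = z then 1 else 0) * M $$ (z, flip_bit j x))"
      using xj fx by (intro sum.cong refl) (auto simp: X_index)
    also have "\<dots> = M $$ (flip_bit j x, flip_bit j x)"
      using fx by (simp add: sum_if_mult2)
    finally have r: "(Xop k j * M) $$ (x, flip_bit j x) = M $$ (flip_bit j x, flip_bit j x)" .
    show ?thesis using l r cx xj(2) by metis
  qed
  have diag: "\<forall>x<2^m. M $$ (x,x) = M $$ (0,0)" if "m \<le> k" for m
    using diag_const[of k "\<lambda>x. M $$ (x,x)" m] diag1 that by blast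
  show ?thesis
  proof (rule eq_matI)
    fix x y assume "x < dim_row (M $$ (0, 0) \<cdot>\<^sub>m 1\<^sub>m (2 ^ k))" "y < dim_col (M $$ (0, 0) \<cdot>\<^sub>m 1\<^sub>m (2 ^ k))"
    then have xy: "x < 2^k" "y < 2^k" by simp_all
    have dk: "M $$ (x,x) = M $$ (0,0)" using diag[of k] xy(1) by blast
    have rhs: "(M $$ (0, 0) \<cdot>\<^sub>m 1\<^sub>m (2 ^ k)) $$ (x, y) = (if x = y then M $$ (0,0) else 0)"
      using xy by simp
    show "M $$ (x, y) = (M $$ (0, 0) \<cdot>\<^sub>m 1\<^sub>m (2 ^ k)) $$ (x, y)"
      unfolding rhs using dk off[OF xy] by (cases "x = y") simp_all
  qed (use M in auto)
qed



lemma sc_facts: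
  assumes "stab_code n k S Enc"
  shows "S \<subseteq> pauli_group n" "Enc \<in> carrier_mat (2^n) (2^k)" "dag Enc * Enc = 1\<^sub>m (2^k)"
    "{Enc *\<^sub>v v | v. v \<in> carrier_vec (2^k)} = code_space n S"
    "\<forall>P\<in>pauli_group k. \<exists>E\<in>pauli_group n. representative n k Enc E P"
  using assms unfolding stab_code_def by blast+

lemma col_enc: "(Enc::complex mat) \<in> carrier_mat N K \<Longrightarrow> i < K \<Longrightarrow> col Enc i = Enc *\<^sub>v unit_vec K i"
proof (rule eq_vecI)
  fix r assume E: "Enc \<in> carrier_mat N K" and i: "i < K" and r: "r < dim_vec (Enc *\<^sub>v unit_vec K i)"
  then have r': "r < N" by simp
  have "(Enc *\<^sub>v unit_vec K i) $ r = row Enc r \<bullet> unit_vec K i" using E r' by simp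
  also have "\<dots> = row Enc r $ i" using scalar_prod_right_unit[OF i] by blast
  also have "\<dots> = Enc $$ (r,i)" using E r' i by simp
  finally show "col Enc i $ r = (Enc *\<^sub>v unit_vec K i) $ r" using E r' i by simp
qed auto

lemma col_code:
  assumes sc: "stab_code n k S Enc" and i: "i < 2^k"
  shows "col Enc i \<in> code_space n S"
proof -
  have "col Enc i = Enc *\<^sub>v unit_vec (2^k) i" using col_enc sc_facts(2)[OF sc] i by blast
  then have "col Enc i \<in> {Enc *\<^sub>v v | v. v \<in> carrier_vec (2^k)}" by auto
  then show ?thesis using sc_facts(4)[OF sc] by simp
qed

lemma stab_fix:
  assumes sc: "stab_code n k S Enc" and g: "g \<in> S"
  shows "g * Enc = Enc"
proof -
  have E: "Enc \<in> carrier_mat (2^n) (2^k)" using sc_facts(2)[OF sc] .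
  have gc: "g \<in> carrier_mat (2^n) (2^n)" using sc_facts(1)[OF sc] g pauli_group_unitary(1) by blast
  show ?thesis
  proof (rule mat_col_eqI)
    fix i assume "i < dim_col Enc"
    then have i: "i < 2^k" using E by simp
    have "col (g * Enc) i = g *\<^sub>v col Enc i" by (rule col_mult2[OF gc E i])
    also have "\<dots> = col Enc i" using col_code[OF sc i] g unfolding code_space_def by blast
    finally show "col (g * Enc) i = col Enc i" .
  qed (use gc E in auto)
qed

lemma dag_stab:
  assumes sc: "stab_code n k S Enc" and g: "g \<in> S"
  shows "dag Enc * g = dag Enc"
proof -
  have E: "Enc \<in> carrier_mat (2^n) (2^k)" using sc_facts(2)[OF sc] .
  have gp: "g \<in> pauli_group n" using sc_facts(1)[OF sc] g by blast
  have gc: "g \<in> carrier_mat (2^n) (2^n)" using pauli_group_unitary(1)[OF gp] .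
  have "dag g * Enc = dag g * (g * Enc)" using stab_fix[OF sc g] by simp
  also have "\<dots> = (dag g * g) * Enc" using gc E by (simp add: assoc_mult_mat[of _ "2^n" "2^n" _ "2^n" _ "2^k"])
  also have "\<dots> = Enc" using pauli_group_unitary(2)[OF gp] E by simp
  finally have "dag g * Enc = Enc" .
  then have "dag (dag g * Enc) = dag Enc" by simp
  then show ?thesis using dag_mult[of "dag g" "2^n" "2^n" Enc "2^k"] gc E by simp
qed

lemma range_proj:
  assumes sc: "stab_code n k S Enc" and Y: "Y \<in> carrier_mat (2^n) m"
    and cols: "\<forall>i<m. col Y i \<in> code_space n S"
  shows "Enc * (dag Enc * Y) = Y"
proof -
  have E: "Enc \<in> carrier_mat (2^n) (2^k)" using sc_facts(2)[OF sc] .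
  have dE: "dag Enc \<in> carrier_mat (2^k) (2^n)" using E by simp
  show ?thesis
  proof (rule mat_col_eqI)
    fix i assume "i < dim_col Y"
    then have i: "i < m" using Y by simp
    obtain v where v: "v \<in> carrier_vec (2^k)" "col Y i = Enc *\<^sub>v v"
      using cols i sc_facts(4)[OF sc] by (smt (verit, best) mem_Collect_eq)
    have dEY: "dag Enc * Y \<in> carrier_mat (2^k) m" using dE Y by simp
    have "col (Enc * (dag Enc * Y)) i = Enc *\<^sub>v (dag Enc *\<^sub>v col Y i)"
      using col_mult2[OF E dEY i] col_mult2[OF dE Y i] by simp
    also have "dag Enc *\<^sub>v col Y i = (dag Enc * Enc) *\<^sub>v v"
      unfolding v(2) by (rule assoc_mult_mat_vec[OF dE E v(1), symmetric])
    also have "\<dots> = v" using sc_facts(3)[OF sc] v by simp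
    finally show "col (Enc * (dag Enc * Y)) i = col Y i" using v by simp
  qed (use E dE Y in auto)
qed

lemma phase_sq: "(z::complex) * z = 1 \<or> z * z = -1 \<Longrightarrow> z \<in> phases"
proof -
  assume h: "z * z = 1 \<or> z * z = -1"
  have "(z - 1) * (z + 1) = 0 \<or> (z - \<i>) * (z + \<i>) = 0"
    using h by (auto simp: algebra_simps)
  then show ?thesis unfolding phases_def by (auto simp: eq_neg_iff_add_eq_0)
qed

lemma phase_sq_pm: "c \<in> phases \<Longrightarrow> c * c = 1 \<or> c * c = -1"
  by (auto simp: phases_def)

lemma phase_inv: "c \<in> phases \<Longrightarrow> 1 / c \<in> phases"
  by (auto simp: phases_def field_simps)

lemma phase_cnj: "c \<in> phases \<Longrightarrow> cnj c \<in> phases"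
  by (auto simp: phases_def)

lemma pauli_in_group: "c \<in> phases \<Longrightarrow> \<forall>j<n. a j < 4 \<Longrightarrow> pauli_string n c a \<in> pauli_group n"
  unfolding pauli_group_def phases_def by blast



lemma tr_expand:
  assumes W: "W \<in> carrier_mat (2^n) (2^n)" and U: "U \<in> carrier_mat (2^n) (2^n)"
  shows "tr (U * W) = (1 / 2^n) * (\<Sum>a\<in>Lab n. coef n U a * tr (pauli_string n 1 a * W))"
proof -
  have trm: "tr (A * W) = (\<Sum>x<2^n. \<Sum>z<2^n. A $$ (x,z) * W $$ (z,x))"
    if A: "A \<in> carrier_mat (2^n) (2^n)" for A
  proof -
    have dr: "dim_row (A * W) = 2^n" using A by simp
    show ?thesis using A W dr by (simp add: tr_def mult_index[OF A W] del: index_mult_mat)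
  qed
  have "tr (U * W) = (\<Sum>x<2^n. \<Sum>z<2^n. ((1 / 2^n) * (\<Sum>a\<in>Lab n. coef n U a * pauli_string n 1 a $$ (x,z))) * W $$ (z,x))"
    unfolding trm[OF U] by (intro sum.cong refl) (subst expansion[of _ n _ U], simp_all)
  also have "\<dots> = (1 / 2^n) * (\<Sum>x<2^n. \<Sum>z<2^n. \<Sum>a\<in>Lab n. coef n U a * (pauli_string n 1 a $$ (x,z) * W $$ (z,x)))"
  proof -
    have pt: "((1 / 2^n) * (\<Sum>a\<in>Lab n. coef n U a * pauli_string n 1 a $$ (x,z))) * W $$ (z,x)
       = (1 / 2^n) * (\<Sum>a\<in>Lab n. coef n U a * (pauli_string n 1 a $$ (x,z) * W $$ (z,x)))" for x z
      by (simp only: sum_distrib_right mult.assoc)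
    show ?thesis by (simp only: pt sum_distrib_left[symmetric])
  qed
  also have "\<dots> = (1 / 2^n) * (\<Sum>a\<in>Lab n. \<Sum>x<2^n. \<Sum>z<2^n. coef n U a * (pauli_string n 1 a $$ (x,z) * W $$ (z,x)))"
    by (rule arg_cong[where f="\<lambda>t. (1 / 2^n) * t"], rule swap3[symmetric])
  also have "\<dots> = (1 / 2^n) * (\<Sum>a\<in>Lab n. coef n U a * tr (pauli_string n 1 a * W))"
    by (simp add: trm[OF pauli_carrier] sum_distrib_left)
  finally show ?thesis .
qed



lemma cleaning:
  assumes sc: "stab_code n k S Enc" and P: "P \<in> pauli_group k" and rep: "representative n k Enc U P"
  shows "\<exists>c a. c \<in> phases \<and> representative n k Enc (pauli_string n c a) P \<and> (\<forall>j<n. a j < 4)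
           \<and> (\<forall>j<n. a j \<noteq> 0 \<longrightarrow> \<not> acts_trivially_on n U j)"
proof -
  have E: "Enc \<in> carrier_mat (2^n) (2^k)" using sc_facts(2)[OF sc] .
  have dE: "dag Enc \<in> carrier_mat (2^k) (2^n)" using E by simp
  have EE: "dag Enc * Enc = 1\<^sub>m (2^k)" using sc_facts(3)[OF sc] .
  have U: "U \<in> carrier_mat (2^n) (2^n)" and Pc: "P \<in> carrier_mat (2^k) (2^k)" and UE: "U * Enc = Enc * P"
    using rep unfolding representative_def by auto
  have dPc: "dag P \<in> carrier_mat (2^k) (2^k)" using Pc by simp
  have PdP: "P * dag P = 1\<^sub>m (2^k)" and dPP: "dag P * P = 1\<^sub>m (2^k)"
    using pauli_group_unitary[OF P] by auto
  obtain cP bP where Pdef: "P = pauli_string k cP bP" and cP: "cP \<in> phases" "\<forall>j<k. bP j < 4" using P by (rule pauli_groupE)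
  obtain EP where EP: "EP \<in> pauli_group n" and EPrep: "representative n k Enc EP P"
    using sc_facts(5)[OF sc] P by blast
  have EPc: "EP \<in> carrier_mat (2^n) (2^n)" and EPE: "EP * Enc = Enc * P"
    using EPrep unfolding representative_def by auto
  have dEPc: "dag EP \<in> carrier_mat (2^n) (2^n)" using EPc by simp
  have EPdEP: "EP * dag EP = 1\<^sub>m (2^n)" and dEPEP: "dag EP * EP = 1\<^sub>m (2^n)"
    using pauli_group_unitary[OF EP] by auto
  obtain cE bE where EPdef: "EP = pauli_string n cE bE" "cE \<in> phases" "\<forall>j<n. bE j < 4" using EP by (rule pauli_groupE)
  have dEPE: "dag EP * Enc = Enc * dag P"
  proof -
    have "dag EP * Enc = dag EP * (Enc * (P * dag P))" using PdP E by simp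
    also have "\<dots> = dag EP * ((Enc * P) * dag P)" using assoc_mult_mat[OF E Pc dPc] by simp
    also have "\<dots> = dag EP * ((EP * Enc) * dag P)" using EPE by simp
    also have "\<dots> = dag EP * (EP * (Enc * dag P))" using assoc_mult_mat[OF EPc E dPc] by simp
    also have "\<dots> = (dag EP * EP) * (Enc * dag P)" using assoc_mult_mat[OF dEPc EPc mult_carrier_mat[OF E dPc]] by simp
    also have "\<dots> = Enc * dag P" using dEPEP E dPc by simp
    finally show ?thesis .
  qed
  define X where "X = dag Enc * dag EP"
  have Xc: "X \<in> carrier_mat (2^k) (2^n)" unfolding X_def by (rule mult_carrier_mat[OF dE dEPc])
  define W where "W = Enc * X"
  have Wc: "W \<in> carrier_mat (2^n) (2^n)" unfolding W_def by (rule mult_carrier_mat[OF E Xc])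
  have trUW: "tr (U * W) = of_nat (2^k)"
  proof -
    have "tr (U * W) = tr ((U * Enc) * X)" using assoc_mult_mat[OF U E Xc] by (simp add: W_def)
    also have "\<dots> = tr (X * (U * Enc))" using U E Xc by (intro tr_cyclic) auto
    also have "X * (U * Enc) = dag Enc * ((dag EP * Enc) * P)"
      unfolding X_def UE using assoc_mult_mat[OF dE dEPc mult_carrier_mat[OF E Pc]] assoc_mult_mat[OF dEPc E Pc] by simp
    also have "\<dots> = (dag Enc * Enc) * (dag P * P)"
      unfolding dEPE using assoc_mult_mat[OF E dPc Pc] assoc_mult_mat[OF dE E mult_carrier_mat[OF dPc Pc]] by simp
    also have "\<dots> = 1\<^sub>m (2^k)" using EE dPP by simp
    finally show ?thesis by simp
  qed
  have "(\<Sum>a\<in>Lab n. coef n U a * tr (pauli_string n 1 a * W)) \<noteq> 0"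
    using trUW tr_expand[OF Wc U] by auto
  then obtain a where aL: "a \<in> Lab n" and ca: "coef n U a \<noteq> 0" and tra: "tr (pauli_string n 1 a * W) \<noteq> 0"
    by (metis (no_types, lifting) mult_eq_0_iff sum.neutral)
  define \<sigma> where "\<sigma> = pauli_string n 1 a"
  have \<sigma>c: "\<sigma> \<in> carrier_mat (2^n) (2^n)" by (simp add: \<sigma>_def)
  define \<rho> where "\<rho> = dag EP * \<sigma>"
  have \<rho>c: "\<rho> \<in> carrier_mat (2^n) (2^n)" unfolding \<rho>_def by (rule mult_carrier_mat[OF dEPc \<sigma>c])
  define M where "M = dag Enc * (\<rho> * Enc)"
  have Mc: "M \<in> carrier_mat (2^k) (2^k)" unfolding M_def by (rule mult_carrier_mat[OF dE mult_carrier_mat[OF \<rho>c E]])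
  have trM: "tr M \<noteq> 0"
  proof -
    have "tr (\<sigma> * W) = tr ((\<sigma> * Enc) * X)" using assoc_mult_mat[OF \<sigma>c E Xc] by (simp add: W_def)
    also have "\<dots> = tr (X * (\<sigma> * Enc))" using \<sigma>c E Xc by (intro tr_cyclic) auto
    also have "X * (\<sigma> * Enc) = M"
      unfolding X_def M_def \<rho>_def using assoc_mult_mat[OF dE dEPc mult_carrier_mat[OF \<sigma>c E]] assoc_mult_mat[OF dEPc \<sigma>c E] by simp
    finally show ?thesis using tra by (simp add: \<sigma>_def)
  qed
  have \<rho>sc: "scomm \<rho> Q" if QP: "Q \<in> pauli_group n" for Q
  proof -
    obtain d b where Q: "Q = pauli_string n d b" "d \<in> phases" "\<forall>j<n. b j < 4" using QP by (rule pauli_groupE)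
    show ?thesis unfolding \<rho>_def
      by (rule scomm_mult[OF dEPc \<sigma>c])
         (simp_all add: Q(1) EPdef(1) dag_pauli \<sigma>_def scomm_pauli)
  qed
  have \<rho>S: "\<rho> * g = g * \<rho>" if gS: "g \<in> S" for g
  proof -
    have gP: "g \<in> pauli_group n" using sc_facts(1)[OF sc] gS by blast
    have gc: "g \<in> carrier_mat (2^n) (2^n)" using pauli_group_unitary(1)[OF gP] .
    obtain s where s: "s = 1 \<or> s = -1" and rg: "\<rho> * g = s \<cdot>\<^sub>m (g * \<rho>)"
      using \<rho>sc[OF gP] unfolding scomm_def by blast
    show ?thesis
    proof (cases "s = 1")
      case True then show ?thesis using rg by simp
    next
      case False
      then have s1: "s = -1" using s by simp
      have "M = dag Enc * (\<rho> * (g * Enc))" unfolding M_def stab_fix[OF sc gS] ..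
      also have "\<dots> = dag Enc * ((\<rho> * g) * Enc)" using assoc_mult_mat[OF \<rho>c gc E] by simp
      also have "\<dots> = dag Enc * (s \<cdot>\<^sub>m ((g * \<rho>) * Enc))"
        unfolding rg using mult_smult_l[OF mult_carrier_mat[OF gc \<rho>c] E] by simp
      also have "\<dots> = s \<cdot>\<^sub>m (dag Enc * ((g * \<rho>) * Enc))"
        by (rule mult_smult_r[OF dE mult_carrier_mat[OF mult_carrier_mat[OF gc \<rho>c] E]])
      also have "dag Enc * ((g * \<rho>) * Enc) = (dag Enc * g) * (\<rho> * Enc)"
        using assoc_mult_mat[OF gc \<rho>c E] assoc_mult_mat[OF dE gc mult_carrier_mat[OF \<rho>c E]] by simp
      also have "\<dots> = M" unfolding dag_stab[OF sc gS] M_def ..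
      finally have "M = s \<cdot>\<^sub>m M" .
      then have "tr M = s * tr M" using tr_smult[OF Mc] by metis
      then have "tr M = 0" using s1 by simp
      then show ?thesis using trM by simp
    qed
  qed
  have \<rho>E: "\<rho> * Enc = Enc * M"
  proof -
    have Y: "\<rho> * Enc \<in> carrier_mat (2^n) (2^k)" using mult_carrier_mat[OF \<rho>c E] .
    have "\<forall>i<2^k. col (\<rho> * Enc) i \<in> code_space n S"
    proof (intro allI impI)
      fix i :: nat assume i: "i < 2^k"
      have ci: "col Enc i \<in> code_space n S" using col_code[OF sc i] .
      then have cv: "col Enc i \<in> carrier_vec (2^n)" unfolding code_space_def by blast
      have eq: "col (\<rho> * Enc) i = \<rho> *\<^sub>v col Enc i" by (rule col_mult2[OF \<rho>c E i])
      show "col (\<rho> * Enc) i \<in> code_space n S"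
        unfolding code_space_def eq
      proof (intro CollectI conjI ballI)
        show "\<rho> *\<^sub>v col Enc i \<in> carrier_vec (2^n)" by (rule mult_mat_vec_carrier[OF \<rho>c cv])
      next
        fix g assume gS: "g \<in> S"
        have gP: "g \<in> pauli_group n" using sc_facts(1)[OF sc] gS by blast
        have gc: "g \<in> carrier_mat (2^n) (2^n)" using pauli_group_unitary(1)[OF gP] .
        have gv: "g *\<^sub>v col Enc i = col Enc i" using ci gS unfolding code_space_def by blast
        have "g *\<^sub>v (\<rho> *\<^sub>v col Enc i) = (g * \<rho>) *\<^sub>v col Enc i"
          using assoc_mult_mat_vec[OF gc \<rho>c cv] by simp
        also have "\<dots> = (\<rho> * g) *\<^sub>v col Enc i" using \<rho>S[OF gS] by simp
        also have "\<dots> = \<rho> *\<^sub>v col Enc i" using assoc_mult_mat_vec[OF \<rho>c gc cv] gv by simp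
        finally show "g *\<^sub>v (\<rho> *\<^sub>v col Enc i) = \<rho> *\<^sub>v col Enc i" .
      qed
    qed
    then have "Enc * (dag Enc * (\<rho> * Enc)) = \<rho> * Enc" by (rule range_proj[OF sc Y])
    then show ?thesis unfolding M_def by simp
  qed
  have MR: "M * R = R * M" if RP: "R \<in> pauli_group k" for R
  proof -
    have Rc: "R \<in> carrier_mat (2^k) (2^k)" using pauli_group_unitary(1)[OF RP] .
    have dRc: "dag R \<in> carrier_mat (2^k) (2^k)" using Rc by simp
    have RdR: "R * dag R = 1\<^sub>m (2^k)" and dRR: "dag R * R = 1\<^sub>m (2^k)"
      using pauli_group_unitary[OF RP] by auto
    obtain ER where ER: "ER \<in> pauli_group n" and ERrep: "representative n k Enc ER R"
      using sc_facts(5)[OF sc] RP by blast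
    have ERc: "ER \<in> carrier_mat (2^n) (2^n)" and ERE: "ER * Enc = Enc * R"
      using ERrep unfolding representative_def by auto
    obtain s where s: "s = 1 \<or> s = -1" and rs: "\<rho> * ER = s \<cdot>\<^sub>m (ER * \<rho>)"
      using \<rho>sc[OF ER] unfolding scomm_def by blast
    have "Enc * (M * R) = (Enc * M) * R" using assoc_mult_mat[OF E Mc Rc] by simp
    also have "\<dots> = (\<rho> * Enc) * R" unfolding \<rho>E ..
    also have "\<dots> = \<rho> * (ER * Enc)" using assoc_mult_mat[OF \<rho>c E Rc] ERE by simp
    also have "\<dots> = (\<rho> * ER) * Enc" using assoc_mult_mat[OF \<rho>c ERc E] by simp
    also have "\<dots> = s \<cdot>\<^sub>m ((ER * \<rho>) * Enc)"
      unfolding rs by (rule mult_smult_l[OF mult_carrier_mat[OF ERc \<rho>c] E])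
    also have "(ER * \<rho>) * Enc = (ER * Enc) * M"
      using assoc_mult_mat[OF ERc \<rho>c E] assoc_mult_mat[OF ERc E Mc] \<rho>E by simp
    also have "\<dots> = Enc * (R * M)" using ERE assoc_mult_mat[OF E Rc Mc] by simp
    finally have e1: "Enc * (M * R) = s \<cdot>\<^sub>m (Enc * (R * M))" .
    have MRc: "M * R \<in> carrier_mat (2^k) (2^k)" and RMc: "R * M \<in> carrier_mat (2^k) (2^k)"
      using Mc Rc by auto
    have l: "dag Enc * (Enc * (M * R)) = M * R"
      using assoc_mult_mat[OF dE E MRc, symmetric] EE left_mult_one_mat[OF MRc] by simp
    have "dag Enc * (s \<cdot>\<^sub>m (Enc * (R * M))) = s \<cdot>\<^sub>m (dag Enc * (Enc * (R * M)))"
      by (rule mult_smult_r[OF dE mult_carrier_mat[OF E RMc]])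
    also have "dag Enc * (Enc * (R * M)) = R * M"
      using assoc_mult_mat[OF dE E RMc, symmetric] EE left_mult_one_mat[OF RMc] by simp
    finally have e2: "M * R = s \<cdot>\<^sub>m (R * M)" using e1 l by metis
    show ?thesis
    proof (cases "s = 1")
      case True then show ?thesis using e2 by simp
    next
      case False
      then have s1: "s = -1" using s by simp
      have "M = (M * R) * dag R" using assoc_mult_mat[OF Mc Rc dRc] RdR right_mult_one_mat[OF Mc] by simp
      also have "\<dots> = s \<cdot>\<^sub>m ((R * M) * dag R)" unfolding e2 by (rule mult_smult_l[OF RMc dRc])
      finally have "tr M = s * tr ((R * M) * dag R)" using tr_smult[OF mult_carrier_mat[OF RMc dRc]] by metis
      also have "tr ((R * M) * dag R) = tr (dag R * (R * M))" by (rule tr_cyclic[OF RMc dRc])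
      also have "dag R * (R * M) = M" using assoc_mult_mat[OF dRc Rc Mc, symmetric] dRR left_mult_one_mat[OF Mc] by simp
      finally have "tr M = 0" using s1 by simp
      then show ?thesis using trM by simp
    qed
  qed
  have Xg: "Xop k j \<in> pauli_group k" and Zg: "Zop k j \<in> pauli_group k" for j
    unfolding Xop_def Zop_def by (rule pauli_in_group, simp add: phases_def, simp)+
  define \<nu> where "\<nu> = M $$ (0,0)"
  have Mscal: "M = \<nu> \<cdot>\<^sub>m 1\<^sub>m (2^k)"
    unfolding \<nu>_def by (rule scalar_if_commutes[OF Mc]) (use MR Xg Zg in auto)
  have \<nu>0: "\<nu> \<noteq> 0"
  proof
    assume "\<nu> = 0"
    then have "M = 0 \<cdot>\<^sub>m 1\<^sub>m (2^k)" using Mscal by simp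
    then have "tr M = 0" using tr_smult[of "1\<^sub>m (2^k)" "2^k" 0] by simp
    then show False using trM by simp
  qed
  have \<rho>E2: "\<rho> * Enc = \<nu> \<cdot>\<^sub>m Enc"
    unfolding \<rho>E Mscal using mult_smult_r[OF E one_carrier_mat, of \<nu>] right_mult_one_mat[OF E] by simp
  have \<sigma>E: "\<sigma> * Enc = \<nu> \<cdot>\<^sub>m (Enc * P)"
  proof -
    have "\<sigma> * Enc = ((EP * dag EP) * \<sigma>) * Enc" using EPdEP left_mult_one_mat[OF \<sigma>c] by simp
    also have "\<dots> = EP * (\<rho> * Enc)"
      unfolding \<rho>_def using assoc_mult_mat[OF EPc dEPc \<sigma>c] assoc_mult_mat[OF EPc mult_carrier_mat[OF dEPc \<sigma>c] E] by simp
    also have "\<dots> = \<nu> \<cdot>\<^sub>m (EP * Enc)" unfolding \<rho>E2 by (rule mult_smult_r[OF EPc E])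
    finally show ?thesis unfolding EPE .
  qed
  have \<sigma>\<sigma>: "\<sigma> * \<sigma> = 1\<^sub>m (2^n)" unfolding \<sigma>_def by (rule pauli_sq)
  have PP: "P * P = (cP * cP) \<cdot>\<^sub>m 1\<^sub>m (2^k)"
    unfolding Pdef pauli_smult[of k cP] smult_mult_smult[OF pauli_carrier pauli_carrier] pauli_sq ..
  have EPc2: "Enc * P \<in> carrier_mat (2^n) (2^k)" using mult_carrier_mat[OF E Pc] .
  define lam where "lam = \<nu> * \<nu> * (cP * cP)"
  have "Enc = (\<sigma> * \<sigma>) * Enc" using \<sigma>\<sigma> left_mult_one_mat[OF E] by simp
  also have "\<dots> = \<sigma> * (\<sigma> * Enc)" by (rule assoc_mult_mat[OF \<sigma>c \<sigma>c E])
  also have "\<dots> = \<nu> \<cdot>\<^sub>m (\<sigma> * (Enc * P))" unfolding \<sigma>E by (rule mult_smult_r[OF \<sigma>c EPc2])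
  also have "\<sigma> * (Enc * P) = (\<sigma> * Enc) * P" by (rule assoc_mult_mat[OF \<sigma>c E Pc, symmetric])
  also have "\<dots> = \<nu> \<cdot>\<^sub>m ((Enc * P) * P)" unfolding \<sigma>E by (rule mult_smult_l[OF EPc2 Pc])
  also have "(Enc * P) * P = Enc * (P * P)" by (rule assoc_mult_mat[OF E Pc Pc])
  also have "\<dots> = (cP * cP) \<cdot>\<^sub>m Enc"
    unfolding PP using mult_smult_r[OF E one_carrier_mat, of "cP * cP"] right_mult_one_mat[OF E] by simp
  finally have Enclam: "Enc = lam \<cdot>\<^sub>m Enc" unfolding lam_def by (simp add: smult_smult_mat mult.assoc)
  have "1\<^sub>m (2^k) = dag Enc * (lam \<cdot>\<^sub>m Enc)" using EE Enclam by metis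
  also have "\<dots> = lam \<cdot>\<^sub>m 1\<^sub>m (2^k)" using mult_smult_r[OF dE E, of lam] EE by simp
  finally have "1\<^sub>m (2^k) $$ (0,0) = (lam \<cdot>\<^sub>m 1\<^sub>m (2^k)) $$ (0,0)" by simp
  then have l1: "lam = 1" by simp
  have "\<nu> * \<nu> = 1 \<or> \<nu> * \<nu> = -1"
  proof -
    have "cP * cP = 1 \<or> cP * cP = -1" using phase_sq_pm[OF cP(1)] .
    then show ?thesis
    proof
      assume "cP * cP = 1" then show ?thesis using l1 unfolding lam_def by simp
    next
      assume "cP * cP = -1"
      then have "- (\<nu> * \<nu>) = 1" using l1 unfolding lam_def by simp
      then have "\<nu> * \<nu> = -1" by (metis minus_minus)
      then show ?thesis by simp
    qed
  qed
  then have \<nu>ph: "\<nu> \<in> phases" by (rule phase_sq)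
  have c: "1 / \<nu> \<in> phases" using phase_inv[OF \<nu>ph] .
  have repE: "representative n k Enc (pauli_string n (1 / \<nu>) a) P"
    unfolding representative_def
  proof (intro conjI)
    show "pauli_string n (1 / \<nu>) a \<in> carrier_mat (2^n) (2^n)" by simp
    show "P \<in> carrier_mat (2^k) (2^k)" using Pc .
    have "pauli_string n (1 / \<nu>) a * Enc = (1 / \<nu>) \<cdot>\<^sub>m (\<sigma> * Enc)"
      unfolding pauli_smult[of n "1 / \<nu>"] \<sigma>_def by (rule mult_smult_l[OF pauli_carrier E])
    also have "\<dots> = Enc * P" unfolding \<sigma>E smult_smult_mat using \<nu>0 by simp
    finally show "pauli_string n (1 / \<nu>) a * Enc = Enc * P" .
  qed
  have a4: "\<forall>j<n. a j < 4" using aL unfolding Lab_def by (auto simp: PiE_iff)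
  have asupp: "\<forall>j<n. a j \<noteq> 0 \<longrightarrow> \<not> acts_trivially_on n U j"
    using coef_trivial ca by blast
  show ?thesis using c repE a4 asupp by blast
qed



lemma triv_pauli_zero:
  assumes j: "j < n" and a0: "a j = 0"
  shows "acts_trivially_on n (pauli_string n c a) j"
  unfolding acts_trivially_on_def
proof (intro allI impI conjI)
  fix x y :: nat assume x: "x < 2^n" and y: "y < 2^n"
  {
    assume d: "bit x j \<noteq> bit y j"
    have "pauli1 (a j) (bit x j) (bit y j) = 0" using a0 d by (simp add: pauli1_def)
    then have "(\<Prod>i<n. pauli1 (a i) (bit x i) (bit y i)) = 0"
      using j by (intro prod_zero) auto
    then show "pauli_string n c a $$ (x, y) = 0" using x y by (simp add: pauli_index)
  }
next
  fix x y :: nat assume x: "x < 2^n" and y: "y < 2^n"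
  have fx: "flip_bit j x < 2^n" "flip_bit j y < 2^n" using flip_lt j x y by auto
  have "(\<Prod>i<n. pauli1 (a i) (bit x i) (bit y i)) = (\<Prod>i<n. pauli1 (a i) (bit (flip_bit j x) i) (bit (flip_bit j y) i))"
    by (rule prod.cong) (auto simp: bit_flip_bit_iff a0 pauli1_def)
  then show "pauli_string n c a $$ (x, y) = pauli_string n c a $$ (flip_bit j x, flip_bit j y)"
    using x y fx by (simp add: pauli_index)
qed

lemma coef_self: "coef n (pauli_string n 1 a) a = 2^n"
proof -
  let ?s = "pauli_string n 1 a"
  have u: "dag ?s * ?s = 1\<^sub>m (2^n)" using pauli_unitary(1)[of 1] by (simp add: phases_def)
  have "coef n ?s a = (\<Sum>y<2^n. \<Sum>x<2^n. cnj (?s $$ (x,y)) * ?s $$ (x,y))"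
    unfolding coef_def by (rule sum.swap)
  also have "\<dots> = (\<Sum>y<(2::nat)^n. (dag ?s * ?s) $$ (y,y))"
  proof (rule sum.cong[OF refl])
    fix y assume "y \<in> {..<(2::nat)^n}"
    then have y: "y < 2^n" by simp
    have dc: "dag ?s \<in> carrier_mat (2^n) (2^n)" by simp
    show "(\<Sum>x<2^n. cnj (?s $$ (x,y)) * ?s $$ (x,y)) = (dag ?s * ?s) $$ (y,y)"
      using mult_index[OF dc pauli_carrier y y] y by simp
  qed
  also have "\<dots> = 2^n" unfolding u by simp
  finally show ?thesis .
qed

lemma nontriv_pauli:
  assumes j: "j < n" and aj: "a j \<noteq> 0" and c: "c \<noteq> 0"
  shows "\<not> acts_trivially_on n (pauli_string n c a) j"
proof
  assume t: "acts_trivially_on n (pauli_string n c a) j"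
  have "acts_trivially_on n (pauli_string n 1 a) j"
    unfolding acts_trivially_on_def
  proof (intro allI impI conjI)
    fix x y :: nat assume x: "x < 2^n" and y: "y < 2^n" and d: "bit x j \<noteq> bit y j"
    then have "pauli_string n c a $$ (x,y) = 0" using t unfolding acts_trivially_on_def by blast
    then show "pauli_string n 1 a $$ (x,y) = 0" using c x y by (simp add: pauli_index)
  next
    fix x y :: nat assume x: "x < 2^n" and y: "y < 2^n"
    have fx: "flip_bit j x < 2^n" "flip_bit j y < 2^n" using flip_lt j x y by auto
    have "pauli_string n c a $$ (x,y) = pauli_string n c a $$ (flip_bit j x, flip_bit j y)"
      using t x y unfolding acts_trivially_on_def by blast
    then show "pauli_string n 1 a $$ (x,y) = pauli_string n 1 a $$ (flip_bit j x, flip_bit j y)"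
      using c x y fx by (simp add: pauli_index)
  qed
  then have "coef n (pauli_string n 1 a) a = 0" using coef_trivial j aj by blast
  then show False by (simp add: coef_self)
qed

lemma weight_pauli:
  assumes c: "c \<noteq> 0"
  shows "weight n (pauli_string n c a) = card {j. j < n \<and> a j \<noteq> 0}"
proof -
  have "{j. j < n \<and> \<not> acts_trivially_on n (pauli_string n c a) j} = {j. j < n \<and> a j \<noteq> 0}"
    using triv_pauli_zero nontriv_pauli[OF _ _ c] by blast
  then show ?thesis unfolding weight_def by simp
qed

lemma weight_le:
  assumes "\<forall>j<n. a j \<noteq> 0 \<longrightarrow> \<not> acts_trivially_on n U j" and c: "c \<noteq> 0"
  shows "weight n (pauli_string n c a) \<le> weight n U"
  unfolding weight_pauli[OF c] unfolding weight_def
  by (rule card_mono) (use assms in auto)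

lemma pauli_zero_id:
  assumes "\<forall>j<n. a j = 0"
  shows "pauli_string n c a = c \<cdot>\<^sub>m 1\<^sub>m (2^n)"
proof (rule eq_matI)
  fix x y assume "x < dim_row (c \<cdot>\<^sub>m 1\<^sub>m (2 ^ n))" "y < dim_col (c \<cdot>\<^sub>m 1\<^sub>m (2 ^ n))"
  then have xy: "x < 2^n" "y < 2^n" by auto
  have "(\<Prod>j<n. pauli1 (a j) (bit x j) (bit y j)) = (\<Prod>j<n. if bit x j = bit y j then 1 else 0)"
    using assms by (intro prod.cong refl) (simp add: pauli1_def)
  also have "\<dots> = (if x = y then 1 else 0)" using bits_eq_lt[OF xy] by (simp add: prod_ind)
  finally show "pauli_string n c a $$ (x, y) = (c \<cdot>\<^sub>m 1\<^sub>m (2 ^ n)) $$ (x, y)"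
    using xy by (simp add: pauli_index)
qed auto

lemma weight_scalar: "weight n (c \<cdot>\<^sub>m 1\<^sub>m (2^n)) = 0"
proof -
  have "acts_trivially_on n (c \<cdot>\<^sub>m 1\<^sub>m (2^n)) j" if "j < n" for j
    unfolding acts_trivially_on_def
  proof (intro allI impI conjI)
    fix x y :: nat assume x: "x < 2^n" and y: "y < 2^n" and "bit x j \<noteq> bit y j"
    then show "(c \<cdot>\<^sub>m 1\<^sub>m (2^n)) $$ (x, y) = 0" by auto
  next
    fix x y :: nat assume x: "x < 2^n" and y: "y < 2^n"
    have fx: "flip_bit j x < 2^n" "flip_bit j y < 2^n" using flip_lt that x y by auto
    have "(flip_bit j x = flip_bit j y) = (x = y)" by (metis flip_flip)
    then show "(c \<cdot>\<^sub>m 1\<^sub>m (2^n)) $$ (x, y) = (c \<cdot>\<^sub>m 1\<^sub>m (2^n)) $$ (flip_bit j x, flip_bit j y)"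
      using x y fx by simp
  qed
  then show ?thesis unfolding weight_def by simp
qed

lemma unitary_mult: "is_unitary N U \<Longrightarrow> is_unitary N V \<Longrightarrow> is_unitary N (U * V)"
proof -
  assume u: "is_unitary N U" and v: "is_unitary N V"
  have U: "U \<in> carrier_mat N N" and V: "V \<in> carrier_mat N N"
    and u1: "dag U * U = 1\<^sub>m N" and u2: "U * dag U = 1\<^sub>m N"
    and v1: "dag V * V = 1\<^sub>m N" and v2: "V * dag V = 1\<^sub>m N"
    using u v unfolding is_unitary_def by auto
  have dU: "dag U \<in> carrier_mat N N" and dV: "dag V \<in> carrier_mat N N" using U V by auto
  have d: "dag (U * V) = dag V * dag U" by (rule dag_mult[OF U V])
  have "dag V * dag U * (U * V) = dag V * ((dag U * U) * V)"
    using assoc_mult_mat[OF dV dU mult_carrier_mat[OF U V]] assoc_mult_mat[OF dU U V] by simp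
  also have "\<dots> = 1\<^sub>m N" using u1 v1 left_mult_one_mat[OF V] by simp
  finally have 1: "dag (U * V) * (U * V) = 1\<^sub>m N" unfolding d .
  have "U * V * (dag V * dag U) = U * ((V * dag V) * dag U)"
    using assoc_mult_mat[OF U V mult_carrier_mat[OF dV dU]] assoc_mult_mat[OF V dV dU] by simp
  also have "\<dots> = 1\<^sub>m N" using u2 v2 left_mult_one_mat[OF dU] by simp
  finally have 2: "U * V * dag (U * V) = 1\<^sub>m N" unfolding d .
  show ?thesis unfolding is_unitary_def using 1 2 U V by auto
qed

lemma unitary_dag: "is_unitary N U \<Longrightarrow> is_unitary N (dag U)"
  unfolding is_unitary_def by auto

lemma gen_group_mono: "X \<subseteq> Y \<Longrightarrow> g \<in> gen_group k X \<Longrightarrow> g \<in> gen_group k Y"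
proof -
  assume XY: "X \<subseteq> Y" and g: "g \<in> gen_group k X"
  from g show ?thesis
    by induction (use XY in \<open>auto intro: gen_group.intros\<close>)
qed

lemma universal_mono: "X \<subseteq> Y \<Longrightarrow> universal k X \<Longrightarrow> universal k Y"
  unfolding universal_def using gen_group_mono by blast



lemma log_dist_le: "representative n k Enc V L \<Longrightarrow> log_dist n k Enc L \<le> weight n V"
  unfolding log_dist_def by (rule Least_le) blast

lemma log_dist_attained:
  assumes "representative n k Enc V L"
  shows "\<exists>U. representative n k Enc U L \<and> weight n U = log_dist n k Enc L"
proof -
  have "\<exists>w. \<exists>U. representative n k Enc U L \<and> weight n U = w" using assms by blast
  then show ?thesis unfolding log_dist_def by (rule LeastI_ex)
qed

lemma per_l:
  assumes sc: "stab_code n k S Enc" and impl: "implements n k Enc Ks A"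
    and P: "P \<in> pauli_group k" and PL: "P \<in> logical_ops k"
    and spread: "\<forall>E\<in>pauli_group n. real (weight n (apply_channel n Ks E)) / real (weight n E) \<le> CA"
  shows "real (log_dist n k Enc (A * P * dag A)) \<le> max 0 CA * real (log_dist n k Enc P)"
proof -
  obtain E0 where "E0 \<in> pauli_group n" "representative n k Enc E0 P" using sc_facts(5)[OF sc] P by blast
  then obtain U where U: "representative n k Enc U P" and wU: "weight n U = log_dist n k Enc P"
    using log_dist_attained by blast
  obtain c a where c: "c \<in> phases" and repE: "representative n k Enc (pauli_string n c a) P"
    and a4: "\<forall>j<n. a j < 4" and supp: "\<forall>j<n. a j \<noteq> 0 \<longrightarrow> \<not> acts_trivially_on n U j"
    using cleaning[OF sc P U] by blast
  define E where "E = pauli_string n c a"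
  have c0: "c \<noteq> 0" using c by (auto simp: phases_def)
  have EP: "E \<in> pauli_group n" unfolding E_def using pauli_in_group[OF c a4] .
  have wE: "weight n E \<le> log_dist n k Enc P" unfolding E_def wU[symmetric] by (rule weight_le[OF supp c0])
  have AU: "A \<in> logical_ops k" and chan: "\<forall>U\<in>logical_ops k. \<forall>U'. representative n k Enc U' U \<longrightarrow>
        representative n k Enc (apply_channel n Ks U') (A * U * dag A)"
    using impl unfolding implements_def by auto
  have repAE: "representative n k Enc (apply_channel n Ks E) (A * P * dag A)"
    using chan PL repE unfolding E_def by blast
  have L1: "log_dist n k Enc (A * P * dag A) \<le> weight n (apply_channel n Ks E)"
    by (rule log_dist_le[OF repAE])
  show ?thesis
  proof (cases "weight n E = 0")
    case False
    have "real (weight n (apply_channel n Ks E)) / real (weight n E) \<le> CA" using spread EP by blast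
    then have "real (weight n (apply_channel n Ks E)) \<le> CA * real (weight n E)"
      using False by (simp add: divide_le_eq)
    also have "\<dots> \<le> max 0 CA * real (weight n E)" by (intro mult_right_mono) auto
    also have "\<dots> \<le> max 0 CA * real (log_dist n k Enc P)" using wE by (intro mult_left_mono) auto
    finally show ?thesis using L1 by linarith
  next
    case True
    have "{j. j < n \<and> a j \<noteq> 0} = {}"
      using True unfolding E_def weight_pauli[OF c0] by simp
    then have "\<forall>j<n. a j = 0" by blast
    then have Eid: "E = c \<cdot>\<^sub>m 1\<^sub>m (2^n)" unfolding E_def by (rule pauli_zero_id)
    have Ec: "Enc \<in> carrier_mat (2^n) (2^k)" using sc_facts(2)[OF sc] .
    have dE: "dag Enc \<in> carrier_mat (2^k) (2^n)" using Ec by simp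
    have EE: "dag Enc * Enc = 1\<^sub>m (2^k)" using sc_facts(3)[OF sc] .
    have Pc: "P \<in> carrier_mat (2^k) (2^k)" and EEnc: "E * Enc = Enc * P"
      using repE unfolding representative_def E_def by auto
    have "E * Enc = c \<cdot>\<^sub>m Enc"
      unfolding Eid using mult_smult_l[OF one_carrier_mat Ec, of c] left_mult_one_mat[OF Ec] by simp
    then have "dag Enc * (Enc * P) = dag Enc * (c \<cdot>\<^sub>m Enc)" using EEnc by simp
    moreover have "dag Enc * (Enc * P) = P"
      using assoc_mult_mat[OF dE Ec Pc, symmetric] EE left_mult_one_mat[OF Pc] by simp
    moreover have "dag Enc * (c \<cdot>\<^sub>m Enc) = c \<cdot>\<^sub>m 1\<^sub>m (2^k)"
      using mult_smult_r[OF dE Ec, of c] EE by simp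
    ultimately have Pid: "P = c \<cdot>\<^sub>m 1\<^sub>m (2^k)" by simp
    have Ac: "A \<in> carrier_mat (2^k) (2^k)" and AdA: "A * dag A = 1\<^sub>m (2^k)"
      using AU unfolding logical_ops_def is_unitary_def by auto
    have dAc: "dag A \<in> carrier_mat (2^k) (2^k)" using Ac by simp
    have "A * P * dag A = (c \<cdot>\<^sub>m A) * dag A"
      unfolding Pid using mult_smult_r[OF Ac one_carrier_mat, of c] right_mult_one_mat[OF Ac] by simp
    also have "\<dots> = c \<cdot>\<^sub>m 1\<^sub>m (2^k)" using mult_smult_l[OF Ac dAc, of c] AdA by simp
    finally have APA: "A * P * dag A = c \<cdot>\<^sub>m 1\<^sub>m (2^k)" .
    have "representative n k Enc (c \<cdot>\<^sub>m 1\<^sub>m (2^n)) (A * P * dag A)"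
      unfolding APA representative_def
      using mult_smult_l[OF one_carrier_mat Ec, of c] left_mult_one_mat[OF Ec]
        mult_smult_r[OF Ec one_carrier_mat, of c] right_mult_one_mat[OF Ec] by simp
    then have "log_dist n k Enc (A * P * dag A) \<le> 0" using log_dist_le weight_scalar by metis
    then show ?thesis by simp
  qed
qed



lemma in_B_gens:
  assumes codes: "\<forall>l. stab_code (nf l) k (Sf l) (Encf l)"
    and impl: "\<forall>l. implements (nf l) k (Encf l) (Af l) A"
    and bs: "bounded_spread nf Af"
  shows "A \<in> B_gens nf k Sf Encf"
proof -
  have AL: "A \<in> logical_ops k" using impl unfolding implements_def by blast
  obtain CA where CA: "\<forall>l. \<forall>E\<in>pauli_group (nf l).
      real (weight (nf l) (apply_channel (nf l) (Af l) E)) / real (weight (nf l) E) \<le> CA"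
    using bs unfolding bounded_spread_def by blast
  have "A * P * dag A \<in> L_down nf k Sf Encf" if PD: "P \<in> P_down nf k Sf Encf" for P
  proof -
    have PG: "P \<in> pauli_group k" and PLd: "P \<in> L_down nf k Sf Encf" using PD unfolding P_down_def by auto
    have PL: "P \<in> logical_ops k" using PLd unfolding L_down_def by blast
    obtain CP where CP: "\<forall>l. real (log_dist (nf l) k (Encf l) P) / real (code_dist (nf l) (Sf l)) \<le> CP"
      using PLd unfolding L_down_def by blast
    have unit: "A * P * dag A \<in> logical_ops k"
      using AL PL unfolding logical_ops_def by (simp add: unitary_mult unitary_dag)
    have "\<forall>l. real (log_dist (nf l) k (Encf l) (A * P * dag A)) / real (code_dist (nf l) (Sf l))
             \<le> max 0 CA * max 0 CP"
    proof
      fix l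
      define d where "d = real (code_dist (nf l) (Sf l))"
      define L where "L = real (log_dist (nf l) k (Encf l) (A * P * dag A))"
      define dP where "dP = real (log_dist (nf l) k (Encf l) P)"
      have d0: "d \<ge> 0" unfolding d_def by simp
      have key: "L \<le> max 0 CA * dP"
        unfolding L_def dP_def using per_l[OF codes[rule_format, of l] impl[rule_format, of l] PG PL] CA by blast
      have r: "dP / d \<le> max 0 CP" using CP unfolding dP_def d_def by (meson max.cobounded2 order_trans)
      have "L / d \<le> (max 0 CA * dP) / d" using key d0 by (rule divide_right_mono)
      also have "\<dots> = max 0 CA * (dP / d)" by simp
      also have "\<dots> \<le> max 0 CA * max 0 CP" using r by (intro mult_left_mono) auto
      finally show "real (log_dist (nf l) k (Encf l) (A * P * dag A)) / real (code_dist (nf l) (Sf l))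
             \<le> max 0 CA * max 0 CP" unfolding L_def d_def .
    qed
    then show ?thesis unfolding L_down_def using unit by blast
  qed
  then show ?thesis unfolding B_gens_def using AL by blast
qed

theorem theorem2:
  fixes nf :: "nat \<Rightarrow> nat" and k :: nat
    and Sf :: "nat \<Rightarrow> complex mat set" and Encf :: "nat \<Rightarrow> complex mat"
  assumes codes: "\<forall>l. stab_code (nf l) k (Sf l) (Encf l)"
    and constrained: "B_constrained nf k Sf Encf"
  shows "\<not> (\<exists>Impl :: (complex mat \<times> (nat \<Rightarrow> complex mat list)) set.
             (\<forall>(A, Af) \<in> Impl. (\<forall>l. implements (nf l) k (Encf l) (Af l) A) \<and> bounded_spread nf Af)
             \<and> universal k (fst ` Impl))"
proof
  assume "\<exists>Impl :: (complex mat \<times> (nat \<Rightarrow> complex mat list)) set.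
             (\<forall>(A, Af) \<in> Impl. (\<forall>l. implements (nf l) k (Encf l) (Af l) A) \<and> bounded_spread nf Af)
             \<and> universal k (fst ` Impl)"
  then obtain Impl :: "(complex mat \<times> (nat \<Rightarrow> complex mat list)) set" where
    I: "\<forall>(A, Af) \<in> Impl. (\<forall>l. implements (nf l) k (Encf l) (Af l) A) \<and> bounded_spread nf Af"
    and U: "universal k (fst ` Impl)" by blast
  have "fst ` Impl \<subseteq> B_gens nf k Sf Encf"
  proof
    fix A assume "A \<in> fst ` Impl"
    then obtain Af where "(A, Af) \<in> Impl" by force
    then have "\<forall>l. implements (nf l) k (Encf l) (Af l) A" "bounded_spread nf Af" using I by auto
    then show "A \<in> B_gens nf k Sf Encf" using in_B_gens[OF codes] by blast
  qed
  then have "universal k (B_gens nf k Sf Encf)" using universal_mono U by blast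
  then show False using constrained unfolding B_constrained_def by blast
qed

end
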